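(* Fix a dimension $D\geqslant 2$. There exist constants $c_1,c_2>0$ (depending only on $D$) such that for every integer $r\geqslant 2$, letting $\mathcal{G}=\{0,1,\dots,r-1\}^D$ be the $r\times r\times\cdots\times r$ grid of $n=r^D$ points, and for every integer $k$ with $0\leqslant k<n$, $$c_1\,\frac{r}{(k+1)^{1/D}}\leqslant \Delta(\mathcal{G},k)\leqslant c_2\,\frac{r}{(k+1)^{1/D}},$$ i.e. $\Delta(\mathcal{G},k)=\Theta\big(r/(k+1)^{1/D}\big)$.
   Context: For a graph $G$ whose vertices are points in $\mathbb{R}^D$, each edge $(u,v)$ has weight equal to the Euclidean distance $d(u,v)$ (edges may cross or overlap), and $d_G(u,v)$ is the length of a shortest path in $G$ between $u$ and $v$. The dilation of $G$ is $\Delta(G)=\max_{u\neq v\in V(G)} d_G(u,v)/d(u,v)$. For a finite set $S$ of $n$ points and an integer $k\ge0$, $\Delta(S,k)$ is the minimum of $\Delta(G)$ over all graphs $G$ with vertex set exactly $S$ and exactly $n-1+k$ edges. *)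

theory Defs
  imports "HOL-Analysis.Analysis" "HOL-Library.Extended_Real"
begin

text \<open>A (simple, undirected) geometric graph on a point set S is given by its edge set:
  a set of two-element subsets of S. Edge weights are Euclidean distances.\<close>

definition graph_edges_on :: "'a set \<Rightarrow> 'a set set" where
  "graph_edges_on S = {{u, v} | u v. u \<in> S \<and> v \<in> S \<and> u \<noteq> v}"

definition is_walk :: "'a set set \<Rightarrow> 'a \<Rightarrow> 'a \<Rightarrow> 'a list \<Rightarrow> bool" where
  "is_walk E u v p \<longleftrightarrow> p \<noteq> [] \<and> hd p = u \<and> last p = v \<and>
     (\<forall>i. Suc i < length p \<longrightarrow> {p ! i, p ! Suc i} \<in> E)"

definition walk_length :: "'a::metric_space list \<Rightarrow> real" where
  "walk_length p = (\<Sum>i<length p - 1. dist (p ! i) (p ! Suc i))"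

text \<open>Shortest-path distance d_G(u,v) (infinite if u and v are not connected).\<close>
definition graph_dist :: "'a::metric_space set set \<Rightarrow> 'a \<Rightarrow> 'a \<Rightarrow> ereal" where
  "graph_dist E u v = (INF p \<in> {p. is_walk E u v p}. ereal (walk_length p))"

definition dilation :: "'a::metric_space set \<Rightarrow> 'a set set \<Rightarrow> ereal" where
  "dilation S E = (SUP (u, v) \<in> {(u, v). u \<in> S \<and> v \<in> S \<and> u \<noteq> v}.
                      graph_dist E u v / ereal (dist u v))"

definition min_dilation :: "'a::metric_space set \<Rightarrow> nat \<Rightarrow> ereal" where
  "min_dilation S k = (INF E \<in> {E. E \<subseteq> graph_edges_on S \<and> card E = card S - 1 + k}.
                          dilation S E)"

definition grid :: "nat \<Rightarrow> (real ^ 'n) set" where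
  "grid r = {x. \<forall>i. x $ i \<in> real ` {0..<r}}"

end

theory Submission
  imports Defs
begin

definition adj :: "'a set set \<Rightarrow> 'a \<Rightarrow> 'a \<Rightarrow> bool" where
  "adj E u v \<longleftrightarrow> {u, v} \<in> E"

lemma adj_sym: "adj E u v = adj E v u"
  unfolding adj_def by (simp add: insert_commute)

lemma walk_length_Nil[simp]: "walk_length [] = 0"
  by (simp add: walk_length_def)

lemma walk_length_single[simp]: "walk_length [x] = 0"
  by (simp add: walk_length_def)

lemma walk_length_Cons2[simp]:
  "walk_length (x # y # xs) = dist x y + walk_length (y # xs)"
  unfolding walk_length_def
  by (simp add: sum.lessThan_Suc_shift del: sum.lessThan_Suc)

lemma is_walk_single[simp]: "is_walk E u v [x] \<longleftrightarrow> x = u \<and> x = v"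
  by (auto simp: is_walk_def)

lemma is_walk_Cons2[simp]:
  "is_walk E u v (x # y # xs) \<longleftrightarrow> x = u \<and> {x, y} \<in> E \<and> is_walk E y v (y # xs)"
proof
  assume h: "is_walk E u v (x # y # xs)"
  then have "{x,y} \<in> E" unfolding is_walk_def by (metis length_Cons nth_Cons_0 nth_Cons_Suc zero_less_Suc Suc_less_eq)
  moreover have "is_walk E y v (y # xs)"
    using h unfolding is_walk_def
    by (auto simp: last_ConsR)
  ultimately show "x = u \<and> {x, y} \<in> E \<and> is_walk E y v (y # xs)" using h by (simp add: is_walk_def)
next
  assume h: "x = u \<and> {x, y} \<in> E \<and> is_walk E y v (y # xs)"
  show "is_walk E u v (x # y # xs)"
    unfolding is_walk_def
  proof (intro conjI allI impI)
    fix i assume i: "Suc i < length (x # y # xs)"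
    show "{(x # y # xs) ! i, (x # y # xs) ! Suc i} \<in> E"
    proof (cases i)
      case 0 then show ?thesis using h by auto
    next
      case (Suc j) then show ?thesis using h i unfolding is_walk_def by auto
    qed
  qed (use h in \<open>simp_all add: is_walk_def\<close>)
qed

lemma is_walk_Nil[simp]: "\<not> is_walk E u v []"
  by (simp add: is_walk_def)

lemma walk_length_nonneg: "walk_length p \<ge> 0"
  unfolding walk_length_def by (simp add: sum_nonneg)

lemma walk_rtranclp: "is_walk E u v p \<Longrightarrow> (adj E)\<^sup>*\<^sup>* u v"
proof (induction p arbitrary: u)
  case Nil then show ?case by simp
next
  case (Cons x xs)
  show ?case
  proof (cases xs)
    case Nil then show ?thesis using Cons by auto
  next
    case (Cons y ys)
    then show ?thesis using Cons.prems Cons.IH[of y]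
      by (auto simp: adj_def intro: converse_rtranclp_into_rtranclp)
  qed
qed

lemma walk_dist: "is_walk E u v p \<Longrightarrow> x \<in> set p \<Longrightarrow> dist u x \<le> walk_length p"
proof (induction p arbitrary: u)
  case Nil then show ?case by simp
next
  case (Cons z xs)
  show ?case
  proof (cases xs)
    case Nil then show ?thesis using Cons by simp
  next
    case (Cons y ys)
    have zu: "z = u" using Cons.prems \<open>xs = y # ys\<close> by simp
    show ?thesis
    proof (cases "x = z")
      case True then show ?thesis using zu walk_length_nonneg[of "z # xs"] by simp
    next
      case False
      then have "x \<in> set xs" using Cons.prems by simp
      then have "dist y x \<le> walk_length xs" using Cons.IH[of y] Cons.prems \<open>xs = y # ys\<close> by simp
      then show ?thesis using zu \<open>xs = y # ys\<close> dist_triangle[of u x y] by simp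
    qed
  qed
qed

lemma walk_last_dist: "is_walk E u v p \<Longrightarrow> dist u v \<le> walk_length p"
  using walk_dist[of E u v p v] by (metis is_walk_def last_in_set)

lemma is_walk_hd: "is_walk E u v p \<Longrightarrow> p = u # tl p"
  unfolding is_walk_def by auto

lemma walk_append:
  "is_walk E u v p \<Longrightarrow> is_walk E v w q \<Longrightarrow>
   is_walk E u w (p @ tl q) \<and> walk_length (p @ tl q) = walk_length p + walk_length q"
proof (induction p arbitrary: u)
  case Nil then show ?case by simp
next
  case (Cons z xs)
  show ?case
  proof (cases xs)
    case Nil
    then have "z = u" "z = v" using Cons by auto
    then show ?thesis using Cons.prems Nil is_walk_hd[OF Cons.prems(2)] by (cases q) auto
  next
    case (Cons y ys)
    then show ?thesis using Cons.prems Cons.IH[of y] by auto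
  qed
qed

lemma walk_mono: "is_walk E u v p \<Longrightarrow> E \<subseteq> E' \<Longrightarrow> is_walk E' u v p"
  unfolding is_walk_def by blast

lemma walk_rev: "is_walk E u v p \<Longrightarrow> is_walk E v u (rev p) \<and> walk_length (rev p) = walk_length p"
proof (induction p arbitrary: u)
  case Nil then show ?case by simp
next
  case (Cons z xs)
  show ?case
  proof (cases xs)
    case Nil then show ?thesis using Cons by auto
  next
    case (Cons y ys)
    then have IH: "is_walk E v y (rev xs) \<and> walk_length (rev xs) = walk_length xs"
      using Cons.IH[of y] Cons.prems by simp
    have zu: "z = u" using Cons.prems Cons by simp
    have e: "is_walk E y u [y, u]" using Cons.prems Cons by (auto simp: insert_commute)
    have e2: "walk_length [y,u] = dist y u" by simp
    have r: "rev (z # xs) = rev xs @ tl [y, u]" using Cons zu by simp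
    have A: "is_walk E v u (rev xs @ tl [y, u]) \<and> walk_length (rev xs @ tl [y, u]) = walk_length (rev xs) + walk_length [y,u]"
      by (rule walk_append[OF conjunct1[OF IH] e])
    have B: "walk_length (z # xs) = dist u y + walk_length xs" using Cons zu by simp
    have "walk_length (rev xs @ tl [y,u]) = walk_length (z # xs)"
      using A B IH e2 dist_commute[of y u] by linarith
    then show ?thesis unfolding r using A by blast
  qed
qed

definition wle :: "'a::metric_space set set \<Rightarrow> 'a \<Rightarrow> 'a \<Rightarrow> real \<Rightarrow> bool" where
  "wle E u v a \<longleftrightarrow> (\<exists>p. is_walk E u v p \<and> walk_length p \<le> a)"

lemma wle_refl: "a \<ge> 0 \<Longrightarrow> wle E u u a"
  unfolding wle_def by (rule exI[of _ "[u]"]) simp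

lemma wle_edge: "{u, v} \<in> E \<Longrightarrow> dist u v \<le> a \<Longrightarrow> wle E u v a"
  unfolding wle_def by (rule exI[of _ "[u, v]"]) (simp add: is_walk_def)

lemma wle_trans: "wle E u v a \<Longrightarrow> wle E v w b \<Longrightarrow> wle E u w (a + b)"
proof -
  assume "wle E u v a" "wle E v w b"
  then obtain p q where p: "is_walk E u v p" "walk_length p \<le> a"
    and q: "is_walk E v w q" "walk_length q \<le> b" unfolding wle_def by blast
  show ?thesis unfolding wle_def
    using walk_append[OF p(1) q(1)] p(2) q(2) by (intro exI[of _ "p @ tl q"]) auto
qed

lemma wle_mono: "wle E u v a \<Longrightarrow> a \<le> b \<Longrightarrow> wle E u v b"
  unfolding wle_def by force

lemma wle_sym: "wle E u v a \<Longrightarrow> wle E v u a"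
  unfolding wle_def using walk_rev by metis

lemma wle_graph_dist: "wle E u v a \<Longrightarrow> graph_dist E u v \<le> ereal a"
  unfolding wle_def graph_dist_def by (auto intro: INF_lower2)

lemma graph_dist_less: "graph_dist E u v < ereal T \<Longrightarrow> \<exists>p. is_walk E u v p \<and> walk_length p < T"
  unfolding graph_dist_def by (auto simp: INF_less_iff)

lemma conn_card:
  fixes S :: "'a set" and E :: "'a set set"
  assumes fin: "finite E" and rS: "r0 \<in> S" and conn: "\<forall>v\<in>S. (adj E)\<^sup>*\<^sup>* v r0"
  shows "card S \<le> card E + 1"
proof -
  define d where "d v = (LEAST l. (adj E ^^ l) v r0)" for v
  have dP: "(adj E ^^ d v) v r0" if vS: "v \<in> S" for v
  proof -
    obtain l where "(adj E ^^ l) v r0" using rtranclp_imp_relpowp[where P="adj E" and x=v and y=r0] conn vS by auto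
    then show ?thesis unfolding d_def by (rule LeastI)
  qed
  have ex: "\<exists>w. adj E v w \<and> d w < d v" if v: "v \<in> S" "v \<noteq> r0" for v
  proof -
    have "d v \<noteq> 0"
    proof
      assume "d v = 0"
      then have "(adj E ^^ 0) v r0" using dP[OF v(1)] by simp
      then show False using v(2) by simp
    qed
    then obtain l where l: "d v = Suc l" by (cases "d v") auto
    then obtain w where w: "adj E v w" "(adj E ^^ l) w r0" using dP[OF v(1)] l relpowp_Suc_D2[where P="adj E" and n=l and x=v and z=r0] by auto
    have "d w \<le> l" unfolding d_def using w(2) by (rule Least_le)
    then show ?thesis using w l by auto
  qed
  define nx where "nx v = (SOME w. adj E v w \<and> d w < d v)" for v
  have nx: "adj E v (nx v) \<and> d (nx v) < d v" if "v \<in> S" "v \<noteq> r0" for v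
    unfolding nx_def using someI_ex[OF ex[OF that]] .
  have inj: "inj_on (\<lambda>v. {v, nx v}) (S - {r0})"
  proof (rule inj_onI)
    fix u v assume u: "u \<in> S - {r0}" and v: "v \<in> S - {r0}" and eq: "{u, nx u} = {v, nx v}"
    show "u = v"
    proof (rule ccontr)
      assume "u \<noteq> v"
      moreover have "u \<in> {v, nx v}" "v \<in> {u, nx u}" using eq by blast+
      ultimately have "u = nx v" "v = nx u" by auto
      then show False using nx[of u] nx[of v] u v by auto
    qed
  qed
  have "(\<lambda>v. {v, nx v}) ` (S - {r0}) \<subseteq> E" using nx by (auto simp: adj_def)
  then have "card (S - {r0}) \<le> card E"
    by (rule card_inj_on_le[OF inj _ fin])
  then have c: "card (S - {r0}) \<le> card E" .
  show ?thesis
  proof (cases "finite S")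
    case True
    then have "card (S - {r0}) = card S - 1" "card S > 0" using rS by (auto simp: card_gt_0_iff)
    then show ?thesis using c by linarith
  next
    case False then show ?thesis by simp
  qed
qed

lemma rtranclp_adj_sym: "(adj E)\<^sup>*\<^sup>* u v \<Longrightarrow> (adj E)\<^sup>*\<^sup>* v u"
proof (induction rule: rtranclp_induct)
  case base then show ?case by simp
next
  case (step y z)
  then have "adj E z y" using adj_sym[of E y z] by simp
  then show ?case using step.IH by (rule converse_rtranclp_into_rtranclp)
qed

definition cpt :: "('a \<Rightarrow> real) \<Rightarrow> ('a \<Rightarrow> real) \<Rightarrow> real \<Rightarrow> 'a \<Rightarrow> 'a \<Rightarrow> real" where
  "cpt X Y y0 u v = X u + (y0 - Y u) / (Y v - Y u) * (X v - X u)"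

definition cr :: "('a \<Rightarrow> real) \<Rightarrow> ('a \<Rightarrow> real) \<Rightarrow> real \<Rightarrow> real \<Rightarrow> 'a \<Rightarrow> 'a \<Rightarrow> bool" where
  "cr X Y x0 y0 u v \<longleftrightarrow> (Y u < y0) \<noteq> (Y v < y0) \<and> x0 \<le> cpt X Y y0 u v"

lemma cpt_sym: "Y u \<noteq> Y v \<Longrightarrow> cpt X Y y0 u v = cpt X Y y0 v u"
  unfolding cpt_def by (simp add: field_simps)

lemma cr_sym: "cr X Y x0 y0 u v = cr X Y x0 y0 v u"
  unfolding cr_def using cpt_sym[of Y u v X y0] by auto

lemma cpt_between:
  assumes "(Y u < y0) \<noteq> (Y v < y0)"
  shows "min (X u) (X v) \<le> cpt X Y y0 u v \<and> cpt X Y y0 u v \<le> max (X u) (X v)"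
proof -
  define l where "l = (y0 - Y u) / (Y v - Y u)"
  have l01: "0 \<le> l \<and> l \<le> 1"
  proof (cases "Y u < y0")
    case True
    then have "y0 \<le> Y v" using assms by auto
    then show ?thesis using True unfolding l_def by (auto simp: divide_simps)
  next
    case False
    then have "Y v < y0" using assms by auto
    then show ?thesis using False unfolding l_def by (auto simp: divide_simps)
  qed
  have ne: "Y v - Y u \<noteq> 0" using assms by auto
  have eq0: "cpt X Y y0 u v = X u + l * (X v - X u)" unfolding cpt_def l_def by simp
  have eq: "cpt X Y y0 u v = (1 - l) * X u + l * X v" unfolding eq0 by (simp add: algebra_simps)
  have "(1 - l) * X u + l * X v \<le> (1 - l) * max (X u) (X v) + l * max (X u) (X v)"
    using l01 by (intro add_mono mult_left_mono) auto
  moreover have "(1 - l) * min (X u) (X v) + l * min (X u) (X v) \<le> (1 - l) * X u + l * X v"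
    using l01 by (intro add_mono mult_left_mono) auto
  ultimately show ?thesis unfolding eq by (simp add: algebra_simps)
qed

fun CRw :: "('a \<Rightarrow> real) \<Rightarrow> ('a \<Rightarrow> real) \<Rightarrow> real \<Rightarrow> real \<Rightarrow> 'a list \<Rightarrow> nat" where
  "CRw X Y x0 y0 (x # y # xs) = of_bool (cr X Y x0 y0 x y) + CRw X Y x0 y0 (y # xs)"
| "CRw X Y x0 y0 _ = 0"

lemma CRw_zero: "(\<forall>u\<in>set p. \<forall>v\<in>set p. \<not> cr X Y x0 y0 u v) \<Longrightarrow> CRw X Y x0 y0 p = 0"
  by (induction X Y x0 y0 p rule: CRw.induct) auto

lemma CRw_side:
  "(\<forall>v\<in>set p. x0 \<le> X v) \<Longrightarrow> p \<noteq> [] \<Longrightarrow>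
   even (CRw X Y x0 y0 p + of_bool ((Y (hd p) < y0) \<noteq> (Y (last p) < y0)))"
proof (induction X Y x0 y0 p rule: CRw.induct)
  case (1 X Y x0 y0 x y xs)
  have IH: "even (CRw X Y x0 y0 (y # xs) + of_bool ((Y y < y0) \<noteq> (Y (last (y # xs)) < y0)))"
    using 1 by simp
  have c: "cr X Y x0 y0 x y \<longleftrightarrow> (Y x < y0) \<noteq> (Y y < y0)"
    using cpt_between[of Y x y0 y X] "1.prems"(1) unfolding cr_def by auto
  show ?case using IH c by (cases "Y x < y0"; cases "Y y < y0"; cases "Y (last (y # xs)) < y0") auto
qed auto

lemma half_even:
  assumes "p \<noteq> []"
    and "(\<forall>v\<in>set p. X v < x0) \<or> (\<forall>v\<in>set p. x0 \<le> X v) \<or> (\<forall>v\<in>set p. Y v < y0) \<or> (\<forall>v\<in>set p. y0 < Y v)"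
  shows "even (CRw X Y x0 y0 p + of_bool (cr X Y x0 y0 (hd p) (last p)))"
proof -
  have hl: "hd p \<in> set p" "last p \<in> set p" using assms(1) by auto
  consider (a) "\<forall>v\<in>set p. X v < x0" | (b) "\<forall>v\<in>set p. x0 \<le> X v"
    | (c) "\<forall>v\<in>set p. Y v < y0" | (d) "\<forall>v\<in>set p. y0 < Y v" using assms(2) by blast
  then show ?thesis
  proof cases
    case a
    have "\<not> cr X Y x0 y0 u v" if "u \<in> set p" "v \<in> set p" for u v
    proof
      assume "cr X Y x0 y0 u v"
      then have s: "(Y u < y0) \<noteq> (Y v < y0)" and x: "x0 \<le> cpt X Y y0 u v" by (simp_all add: cr_def)
      have "cpt X Y y0 u v \<le> max (X u) (X v)" using cpt_between[of Y u y0 v X] s by simp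
      moreover have "max (X u) (X v) < x0" using a that by auto
      ultimately show False using x by linarith
    qed
    then show ?thesis using CRw_zero[of p X Y x0 y0] hl by auto
  next
    case b
    have "cr X Y x0 y0 (hd p) (last p) \<longleftrightarrow> (Y (hd p) < y0) \<noteq> (Y (last p) < y0)"
    proof (cases "(Y (hd p) < y0) \<noteq> (Y (last p) < y0)")
      case True
      have "min (X (hd p)) (X (last p)) \<le> cpt X Y y0 (hd p) (last p)" using cpt_between[of Y "hd p" y0 "last p" X] True by simp
      moreover have "x0 \<le> min (X (hd p)) (X (last p))" using b hl by auto
      ultimately show ?thesis using True unfolding cr_def by linarith
    qed (simp add: cr_def)
    then show ?thesis using CRw_side[OF b assms(1), of Y y0] by simp
  next
    case c
    have "\<not> cr X Y x0 y0 u v" if "u \<in> set p" "v \<in> set p" for u v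
      using c that unfolding cr_def by force
    then show ?thesis using CRw_zero[of p X Y x0 y0] hl by auto
  next
    case d
    have "\<not> cr X Y x0 y0 u v" if "u \<in> set p" "v \<in> set p" for u v
      using d that unfolding cr_def by force
    then show ?thesis using CRw_zero[of p X Y x0 y0] hl by auto
  qed
qed

locale bridges =
  fixes H :: "'a set set" and C :: "'a \<Rightarrow> 'a \<Rightarrow> bool"
  assumes finH: "finite H"
    and Csym: "\<And>u v. C u v = C v u"
    and br: "\<And>a b. {a, b} \<in> H \<Longrightarrow> C a b \<Longrightarrow> \<not> (adj (H - {{a, b}}))\<^sup>*\<^sup>* a b"
begin

definition B where "B = {f \<in> H. \<exists>a b. f = {a, b} \<and> C a b}"
definition ea where "ea f = (SOME a. \<exists>b. f = {a, b} \<and> C a b)"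
definition sg where "sg f w \<longleftrightarrow> (adj (H - {f}))\<^sup>*\<^sup>* (ea f) w"
definition phi where "phi w = (\<Sum>f\<in>B. of_bool (sg f w) :: nat)"

lemma finB: "finite B" using finH unfolding B_def by simp

lemma step_even:
  assumes uv: "{u, v} \<in> H"
  shows "even (of_bool (C u v) + phi u + phi v)"
proof -
  define e where "e = {u, v}"
  have g: "of_bool (sg f u) + of_bool (sg f v) = 2 * of_bool (f \<noteq> e \<and> sg f u) + (of_bool (f = e) :: nat)"
    if f: "f \<in> B" for f
  proof (cases "f = e")
    case False
    have a: "adj (H - {f}) u v" using uv False unfolding adj_def e_def by auto
    have a': "adj (H - {f}) v u" using a adj_sym[of "H - {f}" u v] by simp
    have "sg f u \<longleftrightarrow> sg f v"
      unfolding sg_def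
      using rtranclp.rtrancl_into_rtrancl[of "adj (H - {f})" "ea f" u v, OF _ a]
        rtranclp.rtrancl_into_rtrancl[of "adj (H - {f})" "ea f" v u, OF _ a'] by blast
    then show ?thesis using False by auto
  next
    case True
    obtain a b where ab: "f = {a, b}" "C a b" using f unfolding B_def by auto
    have "\<exists>b. f = {ea f, b} \<and> C (ea f) b"
      using someI_ex[of "\<lambda>a. \<exists>b. f = {a, b} \<and> C a b"] ab unfolding ea_def by blast
    then obtain b' where b': "f = {ea f, b'}" "C (ea f) b'" by blast
    have "f \<in> H" using f unfolding B_def by auto
    have nb: "\<not> sg f b'" unfolding sg_def using br[of "ea f" b'] b' \<open>f \<in> H\<close> by simp
    have ya: "sg f (ea f)" unfolding sg_def by simp
    have "{ea f, b'} = {u, v}" using b' True e_def by simp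
    then have "(u = ea f \<and> v = b') \<or> (u = b' \<and> v = ea f)" using doubleton_eq_iff[of "ea f" b' u v] by blast
    then have "of_bool (sg f u) + of_bool (sg f v) = (1::nat)" using nb ya by auto
    then show ?thesis using True by simp
  qed
  have "phi u + phi v = (\<Sum>f\<in>B. of_bool (sg f u) + of_bool (sg f v))"
    unfolding phi_def by (simp add: sum.distrib)
  also have "\<dots> = (\<Sum>f\<in>B. 2 * of_bool (f \<noteq> e \<and> sg f u) + of_bool (f = e))"
    using g by (rule sum.cong[OF refl])
  also have "\<dots> = 2 * (\<Sum>f\<in>B. of_bool (f \<noteq> e \<and> sg f u)) + of_bool (e \<in> B)"
    using finB by (simp add: sum.distrib sum_distrib_left)
  finally have ph: "phi u + phi v = 2 * (\<Sum>f\<in>B. of_bool (f \<noteq> e \<and> sg f u)) + of_bool (e \<in> B)" .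
  have "e \<in> B \<longleftrightarrow> C u v"
  proof
    assume "e \<in> B"
    then obtain a b where ab: "e = {a, b}" "C a b" unfolding B_def by auto
    then have "(u = a \<and> v = b) \<or> (u = b \<and> v = a)" unfolding e_def by (auto simp: doubleton_eq_iff)
    then show "C u v" using ab(2) Csym[of a b] by auto
  next
    assume "C u v" then show "e \<in> B" unfolding B_def e_def using uv by auto
  qed
  then have "of_bool (C u v) + phi u + phi v = 2 * ((\<Sum>f\<in>B. of_bool (f \<noteq> e \<and> sg f u)) + of_bool (C u v))"
    using ph by simp
  then show ?thesis by (metis dvd_triv_left)
qed


end

lemma walk_even_gen:
  assumes st: "\<And>u v. {u, v} \<in> H \<Longrightarrow> even (of_bool (cr X Y x0 y0 u v) + phi u + (phi v :: nat))"
  shows "is_walk H u v p \<Longrightarrow> even (CRw X Y x0 y0 p + phi u + phi v)"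
proof (induction p arbitrary: u)
  case Nil then show ?case by simp
next
  case (Cons z xs)
  show ?case
  proof (cases xs)
    case Nil then show ?thesis using Cons by auto
  next
    case (Cons y ys)
    then have zu: "z = u" and e: "{u, y} \<in> H" and w: "is_walk H y v xs" using Cons.prems by auto
    have I: "even (CRw X Y x0 y0 xs + phi y + phi v)" using Cons.IH[OF w] .
    have S: "even (of_bool (cr X Y x0 y0 u y) + phi u + phi y)" using st[OF e] .
    have "CRw X Y x0 y0 (z # xs) = of_bool (cr X Y x0 y0 u y) + CRw X Y x0 y0 xs"
      using zu Cons by simp
    then have eq: "CRw X Y x0 y0 (z # xs) + phi u + phi v + 2 * phi y =
       (CRw X Y x0 y0 xs + phi y + phi v) + (of_bool (cr X Y x0 y0 u y) + phi u + phi y)" by simp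
    have "even ((CRw X Y x0 y0 xs + phi y + phi v) + (of_bool (cr X Y x0 y0 u y) + phi u + phi y))"
      using I S by (rule dvd_add)
    then have "even (CRw X Y x0 y0 (z # xs) + phi u + phi v + 2 * phi y)" unfolding eq .
    then show ?thesis by simp
  qed
qed

lemma loop_lemma:
  fixes H :: "'a set set"
  assumes finH: "finite H"
    and walks: "\<forall>i<N. is_walk H (p i) (p (Suc i)) (\<pi> i)"
    and closed: "p N = p 0"
    and odd: "odd (\<Sum>i<N. of_bool (cr X Y x0 y0 (p i) (p (Suc i))) :: nat)"
    and half: "\<forall>i<N. (\<forall>v\<in>set (\<pi> i). X v < x0) \<or> (\<forall>v\<in>set (\<pi> i). x0 \<le> X v) \<or>
                     (\<forall>v\<in>set (\<pi> i). Y v < y0) \<or> (\<forall>v\<in>set (\<pi> i). y0 < Y v)"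
  shows "\<exists>a b. {a, b} \<in> H \<and> cr X Y x0 y0 a b \<and> (adj (H - {{a, b}}))\<^sup>*\<^sup>* a b"
proof (rule ccontr)
  assume "\<not> ?thesis"
  then have br: "\<And>a b. {a, b} \<in> H \<Longrightarrow> cr X Y x0 y0 a b \<Longrightarrow> \<not> (adj (H - {{a, b}}))\<^sup>*\<^sup>* a b" by blast
  interpret bridges H "cr X Y x0 y0"
  proof
    show "finite H" by (rule finH)
  next
    fix u v show "cr X Y x0 y0 u v = cr X Y x0 y0 v u" by (rule cr_sym)
  next
    fix a b assume "{a, b} \<in> H" "cr X Y x0 y0 a b"
    then show "\<not> (adj (H - {{a, b}}))\<^sup>*\<^sup>* a b" by (rule br)
  qed
  let ?c = "\<lambda>i. CRw X Y x0 y0 (\<pi> i)"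
  let ?k = "\<lambda>i. of_bool (cr X Y x0 y0 (p i) (p (Suc i))) :: nat"
  have E1: "even (?c i + phi (p i) + phi (p (Suc i)))" if "i < N" for i
  proof -
    have st: "\<And>u v. {u, v} \<in> H \<Longrightarrow> even (of_bool (cr X Y x0 y0 u v) + phi u + phi v)"
      by (rule step_even)
    have w: "is_walk H (p i) (p (Suc i)) (\<pi> i)" using walks that by simp
    show ?thesis by (rule walk_even_gen[OF st w])
  qed
  have E2: "even (?c i + ?k i)" if "i < N" for i
  proof -
    have w: "is_walk H (p i) (p (Suc i)) (\<pi> i)" using walks that by blast
    then have ne: "\<pi> i \<noteq> []" and hl: "hd (\<pi> i) = p i" "last (\<pi> i) = p (Suc i)" unfolding is_walk_def by auto
    have h: "(\<forall>v\<in>set (\<pi> i). X v < x0) \<or> (\<forall>v\<in>set (\<pi> i). x0 \<le> X v) \<or>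
                     (\<forall>v\<in>set (\<pi> i). Y v < y0) \<or> (\<forall>v\<in>set (\<pi> i). y0 < Y v)" by (rule half[rule_format, OF that])
    have "even (CRw X Y x0 y0 (\<pi> i) + of_bool (cr X Y x0 y0 (hd (\<pi> i)) (last (\<pi> i))))"
      by (rule half_even[OF ne h])
    then show ?thesis unfolding hl .
  qed
  have S1: "even (\<Sum>i<N. ?c i + phi (p i) + phi (p (Suc i)))" using E1 by (intro dvd_sum) auto
  have S2: "even (\<Sum>i<N. ?c i + ?k i)" using E2 by (intro dvd_sum) auto
  have shift: "(\<Sum>i<N. phi (p (Suc i))) = (\<Sum>i<N. phi (p i))"
  proof -
    have "(\<Sum>i<Suc N. phi (p i)) = phi (p 0) + (\<Sum>i<N. phi (p (Suc i)))" by (rule sum.lessThan_Suc_shift)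
    moreover have "(\<Sum>i<Suc N. phi (p i)) = (\<Sum>i<N. phi (p i)) + phi (p N)" by simp
    ultimately show ?thesis using closed by simp
  qed
  have "(\<Sum>i<N. ?c i + phi (p i) + phi (p (Suc i))) = (\<Sum>i<N. ?c i) + 2 * (\<Sum>i<N. phi (p i))"
    using shift by (simp add: sum.distrib)
  then have "even (\<Sum>i<N. ?c i)" using S1 by simp
  moreover have "(\<Sum>i<N. ?c i + ?k i) = (\<Sum>i<N. ?c i) + (\<Sum>i<N. ?k i)" by (simp add: sum.distrib)
  ultimately have "even (\<Sum>i<N. ?k i)" using S2 by simp
  then show False using odd by simp
qed

definition pt :: "('n::finite \<Rightarrow> nat) \<Rightarrow> real ^ 'n" where
  "pt f = (\<chi> i. real (f i))"

lemma pt_nth[simp]: "pt f $ i = real (f i)"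
  unfolding pt_def by simp

lemma pt_inj: "inj pt"
  by (rule injI) (simp add: vec_eq_iff fun_eq_iff)

lemma grid_eq: "grid r = pt ` {f. \<forall>i. f i < r}"
proof
  show "grid r \<subseteq> pt ` {f. \<forall>i. f i < r}"
  proof
    fix x assume "x \<in> grid r"
    then have h: "\<forall>i. \<exists>n. n < r \<and> x $ i = real n" unfolding grid_def by fastforce
    define f where "f i = (SOME n. n < r \<and> x $ i = real n)" for i
    have f: "f i < r \<and> x $ i = real (f i)" for i unfolding f_def using someI_ex[OF h[rule_format, of i]] .
    then have "x = pt f" by (simp add: vec_eq_iff)
    then show "x \<in> pt ` {f. \<forall>i. f i < r}" using f by blast
  qed
next
  show "pt ` {f. \<forall>i. f i < r} \<subseteq> grid r" unfolding grid_def by auto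
qed

lemma card_funs: "card {f :: 'n::finite \<Rightarrow> nat. \<forall>i. f i < r} = r ^ CARD('n)"
proof -
  have "{f :: 'n \<Rightarrow> nat. \<forall>i. f i < r} = Pi\<^sub>E UNIV (\<lambda>_. {..<r})"
    by (auto simp: PiE_UNIV_domain Pi_def)
  then show ?thesis by (simp add: card_PiE)
qed

lemma finite_funs: "finite {f :: 'n::finite \<Rightarrow> nat. \<forall>i. f i < r}"
proof -
  have "{f :: 'n \<Rightarrow> nat. \<forall>i. f i < r} = Pi\<^sub>E UNIV (\<lambda>_. {..<r})"
    by (auto simp: PiE_UNIV_domain Pi_def)
  then show ?thesis by (simp add: finite_PiE)
qed

lemma card_grid: "card (grid r :: (real ^ 'n::finite) set) = r ^ CARD('n)"
  unfolding grid_eq using card_image[OF inj_on_subset[OF pt_inj subset_UNIV]] card_funs by metis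

lemma finite_grid: "finite (grid r)"
  unfolding grid_eq by (rule finite_imageI[OF finite_funs])

lemma comp_le_dist: "\<bar>x $ i - y $ i\<bar> \<le> dist x (y :: real ^ 'n::finite)"
  using dist_vec_nth_le[of x i y] by (simp add: dist_real_def)

lemma dist_pt_single:
  assumes "\<And>c. c \<noteq> c0 \<Longrightarrow> f c = g c"
  shows "dist (pt f) (pt g :: real ^ 'n::finite) = \<bar>real (f c0) - real (g c0)\<bar>"
proof -
  have "(\<Sum>i\<in>UNIV. (dist (pt f $ i) (pt g $ i))\<^sup>2) = (\<Sum>i\<in>UNIV. if i = c0 then (real (f c0) - real (g c0))\<^sup>2 else 0)"
    by (rule sum.cong) (auto simp: assms dist_real_def)
  also have "\<dots> = (real (f c0) - real (g c0))\<^sup>2" by simp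
  finally show ?thesis unfolding dist_vec_def L2_set_def by simp
qed

lemma dist_le_l1:
  "dist x (y :: real ^ 'n::finite) \<le> (\<Sum>i\<in>UNIV. \<bar>x $ i - y $ i\<bar>)"
  using norm_le_l1_cart[of "x - y"] by (simp add: dist_norm)

definition lx :: "nat \<Rightarrow> nat \<Rightarrow> nat" where
  "lx sz i = (if i < sz then i else if i < 2 * sz then sz else if i < 3 * sz then 3 * sz - i else 0)"
definition ly :: "nat \<Rightarrow> nat \<Rightarrow> nat" where
  "ly sz i = (if i < sz then 0 else if i < 2 * sz then i - sz else if i < 3 * sz then sz else if i < 4 * sz then 4 * sz - i else 0)"

lemma loop_step:
  assumes "i < 4 * sz"
  shows "(lx sz (Suc i) = lx sz i \<and> (ly sz (Suc i) = ly sz i + 1 \<or> ly sz i = ly sz (Suc i) + 1)) \<or>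
         (ly sz (Suc i) = ly sz i \<and> (lx sz (Suc i) = lx sz i + 1 \<or> lx sz i = lx sz (Suc i) + 1))"
  using assms unfolding lx_def ly_def by auto

lemma loop_closed: "lx sz (4 * sz) = lx sz 0" "ly sz (4 * sz) = ly sz 0"
  unfolding lx_def ly_def by auto

lemma loop_bounds: "lx sz i \<le> sz" "ly sz i \<le> sz"
  unfolding lx_def ly_def by auto

lemma legs:
  "i < sz \<Longrightarrow> ly sz i = 0"
  "sz \<le> i \<Longrightarrow> i < 2 * sz \<Longrightarrow> lx sz i = sz"
  "2 * sz \<le> i \<Longrightarrow> i < 3 * sz \<Longrightarrow> ly sz i = sz"
  "3 * sz \<le> i \<Longrightarrow> i < 4 * sz \<Longrightarrow> lx sz i = 0"
  unfolding lx_def ly_def by auto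

lemma loop_cross:
  assumes "sz = 2 * j+1" "j \<ge> 1" "i < 4 * sz"
  shows "(((ly sz i \<le> j) \<noteq> (ly sz (Suc i) \<le> j)) \<and> j \<le> lx sz i) \<longleftrightarrow> i = sz + j"
  using assms unfolding lx_def ly_def by auto

definition blk :: "nat \<Rightarrow> ('n::finite \<Rightarrow> nat) \<Rightarrow> (real ^ 'n) set" where
  "blk L \<beta> = {x. \<forall>c. real (L * \<beta> c) \<le> x $ c \<and> x $ c < real (L * (\<beta> c + 1))}"

lemma walk_restrict:
  "is_walk E u v p \<Longrightarrow> set p \<subseteq> K \<Longrightarrow> is_walk {f \<in> E. f \<subseteq> K} u v p"
  unfolding is_walk_def by (auto simp: nth_mem)

lemma cpt_same: "X u = X v \<Longrightarrow> cpt X Y y0 u v = X u"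
  unfolding cpt_def by simp

lemma block_lemma:
  fixes E :: "(real ^ 'n::finite) set set" and i1 i2 :: 'n and \<beta> :: "'n \<Rightarrow> nat"
  assumes i12: "i1 \<noteq> i2"
    and finE: "finite E"
    and unit: "\<forall>u\<in>grid r. \<forall>v\<in>grid r. dist u v = 1 \<longrightarrow> (\<exists>p. is_walk E u v p \<and> walk_length p < T)"
    and jT: "T \<le> real j" and j1: "1 \<le> j"
    and Lr: "\<forall>c. (4 * j + 2) * (\<beta> c + 1) \<le> r"
  shows "\<exists>a b. {a, b} \<in> E \<and> a \<in> blk (4 * j + 2) \<beta> \<and> b \<in> blk (4 * j + 2) \<beta> \<and>
           (adj ({f \<in> E. f \<subseteq> blk (4 * j + 2) \<beta>} - {{a, b}}))\<^sup>*\<^sup>* a b"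
proof -
  define L where "L = 4 * j + 2"
  define sz where "sz = 2 * j + 1"
  define N where "N = 4 * sz"
  define A where "A = L * \<beta> i1 + j"
  define Bn where "Bn = L * \<beta> i2 + j"
  define Pf where "Pf i = (\<lambda>c. if c = i1 then A + lx sz i else if c = i2 then Bn + ly sz i else L * \<beta> c + j)" for i
  define P where "P i = pt (Pf i)" for i
  define H where "H = {f \<in> E. f \<subseteq> blk L \<beta>}"
  define X where "X = (\<lambda>v :: real ^ 'n. v $ i1)"
  define Y where "Y = (\<lambda>v :: real ^ 'n. v $ i2)"
  define x0 where "x0 = real A + real j"
  define y0 where "y0 = real Bn + real j + 1/2"
  have XP: "X (P i) = real A + real (lx sz i)" for i unfolding X_def P_def Pf_def by simp
  have YP: "Y (P i) = real Bn + real (ly sz i)" for i unfolding Y_def P_def Pf_def using i12 by simp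
  have Pc: "real (L * \<beta> c + j) \<le> P i $ c \<and> P i $ c \<le> real (L * \<beta> c + j + sz)" for i c
    unfolding P_def Pf_def A_def Bn_def using loop_bounds[of sz i] by auto
  have Lr': "L * (\<beta> c + 1) \<le> r" for c using Lr unfolding L_def by auto
  have Pgrid: "P i \<in> grid r" for i
  proof -
    have "(if c = i1 then A + lx sz i else if c = i2 then Bn + ly sz i else L * \<beta> c + j) < r" for c
    proof -
      have "(if c = i1 then A + lx sz i else if c = i2 then Bn + ly sz i else L * \<beta> c + j) \<le> L * \<beta> c + j + sz"
        unfolding A_def Bn_def using loop_bounds[of sz i] by auto
      moreover have "L * \<beta> c + j + sz < L * (\<beta> c + 1)" unfolding L_def sz_def by simp
      ultimately show ?thesis using Lr'[of c] by linarith
    qed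
    then show ?thesis unfolding grid_eq P_def Pf_def by blast
  qed
  have Pdist: "dist (P i) (P (Suc i)) = 1" if "i < N" for i
  proof -
    have "i < 4 * sz" using that N_def by simp
    note st = loop_step[OF this]
    show ?thesis
    proof (cases "lx sz (Suc i) = lx sz i \<and> (ly sz (Suc i) = ly sz i + 1 \<or> ly sz i = ly sz (Suc i) + 1)")
      case True
      have "dist (P i) (P (Suc i)) = \<bar>real (Pf i i2) - real (Pf (Suc i) i2)\<bar>"
        unfolding P_def by (rule dist_pt_single[of i2]) (use True i12 in \<open>auto simp: Pf_def\<close>)
      then have "dist (P i) (P (Suc i)) = \<bar>real (Bn + ly sz i) - real (Bn + ly sz (Suc i))\<bar>"
        using i12 by (simp add: Pf_def)
      then show ?thesis using True by auto
    next
      case False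
      then have F: "ly sz (Suc i) = ly sz i \<and> (lx sz (Suc i) = lx sz i + 1 \<or> lx sz i = lx sz (Suc i) + 1)"
        using st by blast
      have "dist (P i) (P (Suc i)) = \<bar>real (Pf i i1) - real (Pf (Suc i) i1)\<bar>"
        unfolding P_def by (rule dist_pt_single[of i1]) (use F i12 in \<open>auto simp: Pf_def\<close>)
      then have "dist (P i) (P (Suc i)) = \<bar>real (A + lx sz i) - real (A + lx sz (Suc i))\<bar>"
        by (simp add: Pf_def)
      then show ?thesis using F by auto
    qed
  qed
  define \<pi> where "\<pi> i = (SOME p. is_walk E (P i) (P (Suc i)) p \<and> walk_length p < T)" for i
  have \<pi>: "is_walk E (P i) (P (Suc i)) (\<pi> i) \<and> walk_length (\<pi> i) < T" if "i < N" for i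
  proof -
    have "\<exists>p. is_walk E (P i) (P (Suc i)) p \<and> walk_length p < T"
      using unit Pgrid Pdist[OF that] by blast
    then show ?thesis unfolding \<pi>_def by (rule someI_ex)
  qed
  have close: "\<bar>v $ c - P i $ c\<bar> < real j" if "i < N" "v \<in> set (\<pi> i)" for i v c
  proof -
    have "dist (P i) v \<le> walk_length (\<pi> i)" using walk_dist \<pi>[OF that(1)] that(2) by blast
    then have "dist (P i) v < real j" using \<pi>[OF that(1)] jT by linarith
    then show ?thesis using comp_le_dist[of v c "P i"] by (simp add: dist_commute)
  qed
  have inblk: "v \<in> blk L \<beta>" if "i < N" "v \<in> set (\<pi> i)" for i v
    unfolding blk_def mem_Collect_eq
  proof (intro allI conjI)
    fix c
    have "real (L * \<beta> c) \<le> v $ c" using Pc[of c i] close[OF that, of c] by (simp add: abs_less_iff)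
    then show "real (L * \<beta> c) \<le> v $ c" .
    have "v $ c < real (L * \<beta> c + j + sz) + real j" using Pc[of c i] close[OF that, of c] by (simp add: abs_less_iff)
    moreover have "real (L * \<beta> c + j + sz) + real j = real (L * (\<beta> c + 1)) - 1" unfolding L_def sz_def by simp
    ultimately show "v $ c < real (L * (\<beta> c + 1))" by simp
  qed
  have finH: "finite H" unfolding H_def using finE by simp
  have walksH: "\<forall>i<N. is_walk H (P i) (P (Suc i)) (\<pi> i)"
    using \<pi> inblk unfolding H_def by (blast intro: walk_restrict)
  have closed: "P N = P 0" unfolding P_def Pf_def N_def by (simp only: loop_closed)
  have crc: "cr X Y x0 y0 (P i) (P (Suc i)) \<longleftrightarrow> i = sz + j" if "i < N" for i
  proof -
    have side: "(Y (P k) < y0) \<longleftrightarrow> ly sz k \<le> j" for k unfolding YP y0_def by linarith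
    have i4: "i < 4 * sz" using that N_def by simp
    have lc: "(((ly sz i \<le> j) \<noteq> (ly sz (Suc i) \<le> j)) \<and> j \<le> lx sz i) \<longleftrightarrow> i = sz + j"
      by (rule loop_cross[OF sz_def j1 i4])
    show ?thesis
    proof (cases "(ly sz i \<le> j) \<noteq> (ly sz (Suc i) \<le> j)")
      case True
      then have "ly sz i \<noteq> ly sz (Suc i)" by auto
      then have "lx sz (Suc i) = lx sz i" using loop_step[OF i4] by auto
      then have "X (P i) = X (P (Suc i))" unfolding XP by simp
      then have "cpt X Y y0 (P i) (P (Suc i)) = X (P i)" by (rule cpt_same)
      then have "cr X Y x0 y0 (P i) (P (Suc i)) \<longleftrightarrow> j \<le> lx sz i"
        unfolding cr_def side using True XP[of i] x0_def by simp
      then show ?thesis using lc True by blast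
    next
      case False
      then show ?thesis using lc unfolding cr_def side by blast
    qed
  qed
  have oddsum: "odd (\<Sum>i<N. of_bool (cr X Y x0 y0 (P i) (P (Suc i))) :: nat)"
  proof -
    have "(\<Sum>i<N. of_bool (cr X Y x0 y0 (P i) (P (Suc i))) :: nat) = (\<Sum>i<N. if i = sz + j then 1 else 0)"
      by (rule sum.cong) (auto simp: crc)
    also have "\<dots> = 1" using N_def sz_def by simp
    finally show ?thesis by simp
  qed
  have half: "\<forall>i<N. (\<forall>v\<in>set (\<pi> i). X v < x0) \<or> (\<forall>v\<in>set (\<pi> i). x0 \<le> X v) \<or>
                     (\<forall>v\<in>set (\<pi> i). Y v < y0) \<or> (\<forall>v\<in>set (\<pi> i). y0 < Y v)"
  proof (intro allI impI)
    fix i assume i: "i < N"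
    have cx: "\<bar>X v - X (P i)\<bar> < real j" "\<bar>Y v - Y (P i)\<bar> < real j" if "v \<in> set (\<pi> i)" for v
      unfolding X_def Y_def using close[OF i that] by auto
    consider (a) "i < sz" | (b) "sz \<le> i" "i < 2 * sz" | (c) "2 * sz \<le> i" "i < 3 * sz"
      | (d) "3 * sz \<le> i" "i < 4 * sz" using i N_def by linarith
    then show "(\<forall>v\<in>set (\<pi> i). X v < x0) \<or> (\<forall>v\<in>set (\<pi> i). x0 \<le> X v) \<or>
                     (\<forall>v\<in>set (\<pi> i). Y v < y0) \<or> (\<forall>v\<in>set (\<pi> i). y0 < Y v)"
    proof cases
      case a
      then have "Y (P i) = real Bn" using YP legs(1) by simp
      then have "\<forall>v\<in>set (\<pi> i). Y v < y0" using cx(2) unfolding y0_def by fastforce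
      then show ?thesis by blast
    next
      case b
      then have "X (P i) = real A + real sz" using XP legs(2) by simp
      then have "\<forall>v\<in>set (\<pi> i). x0 \<le> X v" using cx(1) unfolding x0_def sz_def by fastforce
      then show ?thesis by blast
    next
      case c
      then have "Y (P i) = real Bn + real sz" using YP legs(3) by simp
      then have "\<forall>v\<in>set (\<pi> i). y0 < Y v" using cx(2) unfolding y0_def sz_def by fastforce
      then show ?thesis by blast
    next
      case d
      then have "X (P i) = real A" using XP legs(4) by simp
      then have "\<forall>v\<in>set (\<pi> i). X v < x0" using cx(1) unfolding x0_def by fastforce
      then show ?thesis by blast
    qed
  qed
  obtain a b where ab: "{a, b} \<in> H" "(adj (H - {{a, b}}))\<^sup>*\<^sup>* a b"
    using loop_lemma[OF finH walksH closed oddsum half] by blast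
  then show ?thesis unfolding H_def L_def by auto
qed

lemma powr_root_pow: "m \<ge> 1 \<Longrightarrow> D \<ge> 1 \<Longrightarrow> ((m::real) powr (1 / real D)) ^ D = m"
proof -
  assume m: "m \<ge> 1" and D: "D \<ge> 1"
  have "(m powr (1 / real D)) ^ D = (m powr (1 / real D)) powr real D"
    using m by (simp add: powr_realpow)
  also have "\<dots> = m powr (1 / real D * real D)" by (simp add: powr_powr)
  also have "\<dots> = m" using D m by simp
  finally show ?thesis .
qed

lemma arith_lb:
  fixes T :: real and r k D :: nat
  assumes T1: "T > 1" and D1: "D \<ge> 1"
    and Tlt: "T < real r / (20 * real (k + 1) powr (1 / real D))"
  shows "(r div (4 * nat \<lceil>T\<rceil> + 2)) ^ D \<ge> k + 1"
proof -
  define j where "j = nat \<lceil>T\<rceil>"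
  define L where "L = 4 * j + 2"
  define Q where "Q = r div L"
  define \<mu> where "\<mu> = real (k + 1) powr (1 / real D)"
  have mu1: "\<mu> \<ge> 1" unfolding \<mu>_def by (rule ge_one_powr_ge_zero) auto
  have jlt: "real j < T + 1" unfolding j_def using T1 by linarith
  have L10: "real L < 10 * T" unfolding L_def using jlt T1 by simp
  have Lpos: "real L > 0" unfolding L_def by simp
  have r20: "20 * T * \<mu> < real r" using Tlt mu1 by (simp add: field_simps \<mu>_def)
  have "real L * (2 * \<mu>) < 10 * T * (2 * \<mu>)" using L10 mu1 by (intro mult_strict_right_mono) auto
  then have rho: "2 * \<mu> * real L < real r" using r20 by (simp add: algebra_simps)
  have modlt: "r mod L < L" using Lpos by simp
  have "r = L * Q + r mod L" unfolding Q_def by simp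
  then have "real r < real L * (real Q + 1)" using modlt
    by (metis (mono_tags, lifting) add_less_cancel_left distrib_left mult.right_neutral of_nat_add of_nat_less_iff of_nat_mult of_nat_1)
  then have "2 * \<mu> * real L < real L * (real Q + 1)" using rho by linarith
  then have "2 * \<mu> < real Q + 1" using Lpos by (simp add: mult.commute)
  then have Qmu: "\<mu> \<le> real Q" using mu1 by linarith
  have "\<mu> ^ D \<le> real Q ^ D" using Qmu mu1 by (intro power_mono) auto
  moreover have "\<mu> ^ D = real (k + 1)" unfolding \<mu>_def by (rule powr_root_pow) (use D1 in auto)
  ultimately have "real (k + 1) \<le> real (Q ^ D)" by simp
  then show ?thesis unfolding Q_def L_def j_def by linarith
qed

lemma rtranclp_lift:
  assumes "\<And>x y. R x y \<Longrightarrow> S\<^sup>*\<^sup>* x y" and "R\<^sup>*\<^sup>* u v"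
  shows "S\<^sup>*\<^sup>* u v"
  using assms(2)
proof (induction rule: rtranclp_induct)
  case base then show ?case by simp
next
  case (step y z)
  show ?case using rtranclp_trans[OF step.IH assms(1)[OF step.hyps(2)]] .
qed

lemma adj_mono_rt: "E \<subseteq> E' \<Longrightarrow> (adj E)\<^sup>*\<^sup>* u v \<Longrightarrow> (adj E')\<^sup>*\<^sup>* u v"
proof -
  assume sub: "E \<subseteq> E'" and uv: "(adj E)\<^sup>*\<^sup>* u v"
  have "(adj E')\<^sup>*\<^sup>* x y" if "adj E x y" for x y
  proof -
    have "adj E' x y" using that sub unfolding adj_def by auto
    then show ?thesis by simp
  qed
  then show ?thesis using rtranclp_lift[of "adj E" "adj E'"] uv by blast
qed

lemma blk_disj:
  assumes "x \<in> blk L \<beta>" "x \<in> blk L \<gamma>" "L > 0"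
  shows "\<beta> = \<gamma>"
proof
  fix c
  have a: "real (L * \<beta> c) \<le> x $ c" "x $ c < real (L * (\<beta> c + 1))" using assms(1) unfolding blk_def by auto
  have b: "real (L * \<gamma> c) \<le> x $ c" "x $ c < real (L * (\<gamma> c + 1))" using assms(2) unfolding blk_def by auto
  have lt1: "L * \<beta> c < L * (\<gamma> c + 1)" using a(1) b(2) by linarith
  have "\<beta> c < \<gamma> c + 1"
  proof (rule ccontr)
    assume "\<not> \<beta> c < \<gamma> c + 1"
    then have "L * (\<gamma> c + 1) \<le> L * \<beta> c" by (intro mult_le_mono2) simp
    then show False using lt1 by linarith
  qed
  moreover have lt2: "L * \<gamma> c < L * (\<beta> c + 1)" using a(2) b(1) by linarith
  have "\<gamma> c < \<beta> c + 1"
  proof (rule ccontr)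
    assume "\<not> \<gamma> c < \<beta> c + 1"
    then have "L * (\<beta> c + 1) \<le> L * \<gamma> c" by (intro mult_le_mono2) simp
    then show False using lt2 by linarith
  qed
  ultimately show "\<beta> c = \<gamma> c" by simp
qed

lemma dil_pair:
  assumes "u \<in> S" "v \<in> S" "u \<noteq> v"
  shows "graph_dist E u v / ereal (dist u v) \<le> dilation S E"
  unfolding dilation_def using assms by (intro SUP_upper2[of "(u, v)"]) auto

lemma lower_main:
  fixes E :: "(real ^ 'n::finite) set set"
  assumes D2: "CARD('n) \<ge> 2" and r2: "r \<ge> 2"
    and Esub: "E \<subseteq> graph_edges_on (grid r)"
    and cardE: "card E = r ^ CARD('n) - 1 + k"
    and dil: "dilation (grid r) E < ereal T"
  shows "T \<ge> real r / (20 * real (k + 1) powr (1 / real CARD('n)))"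
proof (rule ccontr)
  assume Tlt: "\<not> ?thesis"
  define D where "D = CARD('n)"
  define S where "S = (grid r :: (real ^ 'n) set)"
  obtain i1 i2 :: 'n where i12: "i1 \<noteq> i2"
  proof -
    have "card (UNIV :: 'n set) \<ge> 2" using D2 by simp
    then obtain A where "A \<subseteq> (UNIV :: 'n set)" "card A = 2" by (meson obtain_subset_with_card_n)
    then have "\<exists>x y. A = {x, y} \<and> x \<noteq> y" by (simp add: card_2_iff)
    then obtain a b :: 'n where "a \<noteq> b" by blast
    then show ?thesis using that by blast
  qed
  have rD: "r ^ D \<ge> 4"
  proof -
    have "r ^ D \<ge> 2 ^ D" using r2 by (simp add: power_mono)
    moreover have "(2::nat) ^ D \<ge> 2 ^ 2" using D2 unfolding D_def by (intro power_increasing) auto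
    ultimately show ?thesis by simp
  qed
  have finE: "finite E"
  proof (rule ccontr)
    assume "infinite E" then have "card E = 0" by simp
    then show False using cardE rD unfolding D_def by simp
  qed
  have ratio: "graph_dist E u v / ereal (dist u v) < ereal T" if "u \<in> S" "v \<in> S" "u \<noteq> v" for u v
    using dil_pair[of u S v E] that dil unfolding S_def by simp
  have unit: "\<forall>u\<in>grid r. \<forall>v\<in>grid r. dist u v = 1 \<longrightarrow> (\<exists>p. is_walk E u v p \<and> walk_length p < T)"
  proof (intro ballI impI)
    fix u v :: "real ^ 'n" assume uv: "u \<in> grid r" "v \<in> grid r" "dist u v = 1"
    then have "u \<noteq> v" by auto
    then have "graph_dist E u v / ereal 1 < ereal T" using ratio[of u v] uv unfolding S_def by simp
    then have "graph_dist E u v < ereal T" by (simp add: one_ereal_def[symmetric])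
    then show "\<exists>p. is_walk E u v p \<and> walk_length p < T" by (rule graph_dist_less)
  qed
  define r0 :: "real ^ 'n" where "r0 = pt (\<lambda>_. 0)"
  have r0S: "r0 \<in> S" unfolding S_def r0_def grid_eq using r2 by auto
  have conn: "(adj E)\<^sup>*\<^sup>* u r0" if "u \<in> S" for u
  proof (cases "u = r0")
    case True then show ?thesis by simp
  next
    case False
    have d: "dist u r0 > 0" using False by simp
    have lt: "graph_dist E u r0 / ereal (dist u r0) < ereal T" using ratio[OF that r0S False] .
    have "graph_dist E u r0 \<noteq> \<infinity>"
    proof
      assume "graph_dist E u r0 = \<infinity>"
      then have "graph_dist E u r0 / ereal (dist u r0) = \<infinity>" using d by simp
      then show False using lt by simp
    qed
    have "{p. is_walk E u r0 p} \<noteq> {}"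
    proof
      assume "{p. is_walk E u r0 p} = {}"
      then have "graph_dist E u r0 = (INF p\<in>{}. ereal (walk_length p))" unfolding graph_dist_def by simp
      then have "graph_dist E u r0 = \<infinity>" by (simp add: top_ereal_def)
      then show False using \<open>graph_dist E u r0 \<noteq> \<infinity>\<close> by simp
    qed
    then obtain p where "is_walk E u r0 p" by blast
    then show ?thesis by (rule walk_rtranclp)
  qed
  define u1 :: "real ^ 'n" where "u1 = pt (\<lambda>c. if c = i1 then 1 else 0)"
  have u1S: "u1 \<in> grid r" unfolding u1_def grid_eq using r2 by auto
  have "dist r0 u1 = 1"
    unfolding r0_def u1_def by (subst dist_pt_single[of i1]) auto
  then obtain p1 where p1: "is_walk E r0 u1 p1" "walk_length p1 < T"
    using unit r0S u1S unfolding S_def by blast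
  have T1: "T > 1" using walk_last_dist[OF p1(1)] p1(2) \<open>dist r0 u1 = 1\<close> by simp
  define j where "j = nat \<lceil>T\<rceil>"
  define L where "L = 4 * j + 2"
  define Q where "Q = r div L"
  have jT: "T \<le> real j" unfolding j_def by linarith
  have j1: "1 \<le> j" unfolding j_def using T1 by linarith
  have Lpos: "L > 0" unfolding L_def by simp
  define Bs where "Bs = {\<beta> :: 'n \<Rightarrow> nat. \<forall>c. \<beta> c < Q}"
  have cardBs: "card Bs = Q ^ D" unfolding Bs_def D_def by (rule card_funs)
  have finBs: "finite Bs" unfolding Bs_def by (rule finite_funs)
  define Pr where "Pr \<beta> e \<longleftrightarrow> (\<exists>a b. e = {a, b} \<and> e \<in> E \<and> a \<in> blk L \<beta> \<and> b \<in> blk L \<beta> \<and>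
       (adj ({f \<in> E. f \<subseteq> blk L \<beta>} - {e}))\<^sup>*\<^sup>* a b)" for \<beta> e
  have exPr: "\<exists>e. Pr \<beta> e" if "\<beta> \<in> Bs" for \<beta>
  proof -
    have Lr: "\<forall>c. (4 * j + 2) * (\<beta> c + 1) \<le> r"
    proof
      fix c
      have "\<beta> c + 1 \<le> Q" using that unfolding Bs_def by (simp add: Suc_le_eq)
      then have "L * (\<beta> c + 1) \<le> L * Q" by (rule mult_le_mono2)
      also have "\<dots> \<le> r" unfolding Q_def by simp
      finally show "(4 * j + 2) * (\<beta> c + 1) \<le> r" unfolding L_def .
    qed
    from block_lemma[OF i12 finE unit jT j1 Lr]
    show ?thesis unfolding Pr_def L_def by blast
  qed
  define e where "e \<beta> = (SOME e. Pr \<beta> e)" for \<beta>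
  have ePr: "Pr \<beta> (e \<beta>)" if "\<beta> \<in> Bs" for \<beta> unfolding e_def using someI_ex[OF exPr[OF that]] .
  have eblk: "e \<beta> \<subseteq> blk L \<beta>" "e \<beta> \<noteq> {}" "e \<beta> \<in> E" if "\<beta> \<in> Bs" for \<beta>
    using ePr[OF that] unfolding Pr_def by auto
  have inj: "inj_on e Bs"
  proof (rule inj_onI)
    fix \<beta> \<gamma> assume b: "\<beta> \<in> Bs" and g: "\<gamma> \<in> Bs" and eq: "e \<beta> = e \<gamma>"
    obtain x where "x \<in> e \<beta>" using eblk(2)[OF b] by blast
    then have "x \<in> blk L \<beta>" "x \<in> blk L \<gamma>" using eblk(1)[OF b] eblk(1)[OF g] eq by auto
    then show "\<beta> = \<gamma>" using blk_disj Lpos by blast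
  qed
  define F where "F = e ` Bs"
  have cardF: "card F = Q ^ D" unfolding F_def using card_image[OF inj] cardBs by simp
  have FE: "F \<subseteq> E" unfolding F_def using eblk by auto
  have liftE: "(adj (E - F))\<^sup>*\<^sup>* x y" if "adj E x y" for x y
  proof (cases "{x, y} \<in> F")
    case False
    then have "adj (E - F) x y" using that unfolding adj_def by simp
    then show ?thesis by simp
  next
    case True
    then obtain \<beta> where b: "\<beta> \<in> Bs" and xy: "{x, y} = e \<beta>" unfolding F_def by auto
    obtain a b' where ab: "e \<beta> = {a, b'}" and
      con: "(adj ({f \<in> E. f \<subseteq> blk L \<beta>} - {e \<beta>}))\<^sup>*\<^sup>* a b'"
      using ePr[OF b] unfolding Pr_def by blast
    have sub: "{f \<in> E. f \<subseteq> blk L \<beta>} - {e \<beta>} \<subseteq> E - F"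
    proof
      fix f assume f: "f \<in> {f \<in> E. f \<subseteq> blk L \<beta>} - {e \<beta>}"
      show "f \<in> E - F"
      proof (rule ccontr)
        assume "f \<notin> E - F"
        then obtain \<gamma> where g: "\<gamma> \<in> Bs" "f = e \<gamma>" using f unfolding F_def by auto
        then have "\<gamma> \<noteq> \<beta>" using f by auto
        obtain z where "z \<in> e \<gamma>" using eblk(2)[OF g(1)] by blast
        then have "z \<in> blk L \<beta>" "z \<in> blk L \<gamma>" using f g eblk(1)[OF g(1)] by auto
        then show False using blk_disj Lpos \<open>\<gamma> \<noteq> \<beta>\<close> by blast
      qed
    qed
    have c2: "(adj (E - F))\<^sup>*\<^sup>* a b'" using adj_mono_rt[OF sub con] .
    have "(x = a \<and> y = b') \<or> (x = b' \<and> y = a)" using xy ab doubleton_eq_iff[of x y a b'] by blast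
    then show ?thesis using c2 rtranclp_adj_sym[OF c2] by blast
  qed
  have conn2: "\<forall>v\<in>S. (adj (E - F))\<^sup>*\<^sup>* v r0"
    using conn rtranclp_lift[of "adj E" "adj (E - F)", OF liftE] by blast
  have "card S \<le> card (E - F) + 1"
    by (rule conn_card[OF _ r0S conn2]) (use finE in simp)
  moreover have "card (E - F) = card E - card F" using FE finE by (simp add: card_Diff_subset finite_subset)
  moreover have "card S = r ^ D" unfolding S_def D_def by (rule card_grid)
  moreover have "card F \<le> card E" using FE finE by (simp add: card_mono)
  ultimately have "Q ^ D \<le> k" using cardE cardF rD unfolding D_def by linarith
  moreover have "Q ^ D \<ge> k + 1"
    unfolding Q_def L_def j_def D_def
    by (rule arith_lb[OF T1]) (use D2 Tlt in auto)
  ultimately show False by simp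
qed

definition GG :: "nat \<Rightarrow> ('n::finite \<Rightarrow> nat) set" where
  "GG r = {f. \<forall>c. f c < r}"
definition Hb :: "nat \<Rightarrow> nat \<Rightarrow> ('n::finite \<Rightarrow> nat) set" where
  "Hb r L = {f \<in> GG r. \<forall>c. L dvd f c}"
definition hub :: "nat \<Rightarrow> ('n::finite \<Rightarrow> nat) \<Rightarrow> ('n \<Rightarrow> nat)" where
  "hub L f = (\<lambda>c. L * (f c div L))"
definition pc :: "nat \<Rightarrow> ('n::finite \<Rightarrow> nat) \<Rightarrow> 'n" where
  "pc L f = (SOME c. \<not> L dvd f c)"
definition par :: "nat \<Rightarrow> ('n::finite \<Rightarrow> nat) \<Rightarrow> ('n \<Rightarrow> nat)" where
  "par L f = f(pc L f := f (pc L f) - 1)"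
definition Tr :: "nat \<Rightarrow> nat \<Rightarrow> (real ^ 'n::finite) set set" where
  "Tr r L = (\<lambda>f. {pt f, pt (par L f)}) ` (GG r - Hb r L)"
definition Co :: "nat \<Rightarrow> nat \<Rightarrow> (real ^ 'n::finite) set set" where
  "Co r L = (\<lambda>(h, c). {pt h, pt (h(c := h c + L))}) ` {(h, c). h \<in> Hb r L \<and> h c + L < r}"
definition E0 :: "nat \<Rightarrow> nat \<Rightarrow> (real ^ 'n::finite) set set" where
  "E0 r L = Tr r L \<union> Co r L"

definition nd :: "nat \<Rightarrow> nat \<Rightarrow> nat" where
  "nd a b = (if a \<le> b then b - a else a - b)"

lemma sum_upd:
  fixes \<phi> :: "'n::finite \<Rightarrow> nat"
  shows "(\<Sum>c\<in>UNIV. (\<phi>(c0 := y)) c) + \<phi> c0 = (\<Sum>c\<in>UNIV. \<phi> c) + y"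
proof -
  have a: "(\<Sum>c\<in>UNIV. (\<phi>(c0 := y)) c) = y + (\<Sum>c\<in>UNIV - {c0}. (\<phi>(c0 := y)) c)"
    by (subst sum.remove[of UNIV c0]) auto
  have b: "(\<Sum>c\<in>UNIV. \<phi> c) = \<phi> c0 + (\<Sum>c\<in>UNIV - {c0}. \<phi> c)"
    by (subst sum.remove[of UNIV c0]) auto
  have c: "(\<Sum>c\<in>UNIV - {c0}. (\<phi>(c0 := y)) c) = (\<Sum>c\<in>UNIV - {c0}. \<phi> c)"
    by (rule sum.cong) auto
  show ?thesis using a b c by simp
qed

lemma tree_wle:
  assumes L1: "L \<ge> 1"
  shows "f \<in> GG r \<Longrightarrow> wle (E0 r L) (pt f) (pt (hub L f)) (real (\<Sum>c\<in>UNIV. f c mod L))"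
proof (induction "\<Sum>c\<in>UNIV. f c mod L" arbitrary: f rule: less_induct)
  case less
  show ?case
  proof (cases "\<forall>c. f c mod L = 0")
    case True
    then have "hub L f = f" unfolding hub_def by (auto simp: fun_eq_iff mult_div_mod_eq)
      (metis add.right_neutral mult_div_mod_eq)
    then show ?thesis using wle_refl[of "real (\<Sum>c\<in>UNIV. f c mod L)" "E0 r L" "pt f"] by (simp add: sum_nonneg)
  next
    case False
    then have ex: "\<exists>c. \<not> L dvd f c" by (auto simp: dvd_eq_mod_eq_0)
    define c0 where "c0 = pc L f"
    have c0: "\<not> L dvd f c0" unfolding c0_def pc_def using someI_ex[OF ex] .
    define g where "g = par L f"
    have g: "g = f(c0 := f c0 - 1)" unfolding g_def par_def c0_def ..
    have fc0: "f c0 mod L \<ge> 1" using c0 by (simp add: dvd_eq_mod_eq_0)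
    then have fc0': "f c0 \<ge> 1" using mod_less_eq_dividend[of "f c0" L] by linarith
    have dm: "f c0 - 1 = L * (f c0 div L) + (f c0 mod L - 1)" using fc0 mult_div_mod_eq[of L "f c0"]
      by linarith
    have mlt: "f c0 mod L - 1 < L" using mod_less_divisor[of L "f c0"] L1 by linarith
    have gdiv: "(f c0 - 1) div L = f c0 div L" unfolding dm using mlt L1 by simp
    have gmod: "(f c0 - 1) mod L = f c0 mod L - 1" unfolding dm using mlt L1 by simp
    have gG: "g \<in> GG r" using less.prems unfolding g GG_def by (auto simp: less_imp_diff_less)
    have fnH: "f \<in> GG r - Hb r L" using less.prems c0 unfolding Hb_def by auto
    have hubeq: "hub L g = hub L f" unfolding hub_def g using gdiv by (auto simp: fun_eq_iff)
    have modfun: "(\<lambda>c. g c mod L) = (\<lambda>c. f c mod L)(c0 := f c0 mod L - 1)"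
      unfolding g using gmod by (auto simp: fun_eq_iff)
    have sumeq: "(\<Sum>c\<in>UNIV. g c mod L) + 1 = (\<Sum>c\<in>UNIV. f c mod L)"
      using sum_upd[of "\<lambda>c. f c mod L" c0 "f c0 mod L - 1"] fc0 unfolding modfun[symmetric] by simp
    have IH: "wle (E0 r L) (pt g) (pt (hub L g)) (real (\<Sum>c\<in>UNIV. g c mod L))"
      using less.hyps[of g] gG sumeq by simp
    have edge: "{pt f, pt g} \<in> E0 r L" unfolding E0_def Tr_def g_def using fnH by blast
    have d1: "dist (pt f) (pt g :: real ^ 'a) = 1"
      by (subst dist_pt_single[of c0]) (use fc0' in \<open>auto simp: g\<close>)
    have W1: "wle (E0 r L) (pt f) (pt g) 1" using wle_edge[OF edge] d1 by simp
    have "1 + real (\<Sum>c\<in>UNIV. g c mod L) = real (\<Sum>c\<in>UNIV. f c mod L)"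
      using arg_cong[OF sumeq, of real] by simp
    then show ?thesis using wle_trans[OF W1 IH] hubeq by simp
  qed
qed


lemma mult_gap:
  fixes a b L :: nat
  assumes "L dvd a" "L dvd b" "a < b"
  shows "a + L \<le> b"
proof -
  obtain x y where xy: "a = L * x" "b = L * y" using assms(1,2) by (auto elim!: dvdE)
  have "x < y"
  proof (rule ccontr)
    assume "\<not> x < y"
    then have "L * y \<le> L * x" by (intro mult_le_mono2) simp
    then show False using assms(3) xy by simp
  qed
  then have "L * (x + 1) \<le> L * y" by (intro mult_le_mono2) simp
  then show ?thesis using xy by simp
qed

lemma hub_wle:
  assumes L1: "L \<ge> 1"
  shows "h \<in> Hb r L \<Longrightarrow> h' \<in> Hb r L \<Longrightarrow>
    wle (E0 r L) (pt h) (pt h') (real (\<Sum>c\<in>UNIV. nd (h c) (h' c)))"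
proof (induction "\<Sum>c\<in>UNIV. nd (h c) (h' c)" arbitrary: h rule: less_induct)
  case less
  show ?case
  proof (cases "h = h'")
    case True
    then have "(\<Sum>c\<in>UNIV. nd (h c) (h' c)) = 0" by (simp add: nd_def)
    then show ?thesis using True wle_refl[of 0 "E0 r L" "pt h"] by simp
  next
    case False
    then obtain c0 where c0: "h c0 \<noteq> h' c0" by (auto simp: fun_eq_iff)
    have hH: "h \<in> GG r" "\<forall>c. L dvd h c" using less.prems(1) unfolding Hb_def by auto
    have hH': "h' \<in> GG r" "\<forall>c. L dvd h' c" using less.prems(2) unfolding Hb_def by auto
    have r1: "h c0 < r" "h' c0 < r" using hH(1) hH'(1) unfolding GG_def by auto
    consider (lt) "h c0 < h' c0" | (gt) "h' c0 < h c0" using c0 by linarith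
    then show ?thesis
    proof cases
      case lt
      have gap: "h c0 + L \<le> h' c0" by (rule mult_gap) (use hH(2) hH'(2) lt in auto)
      define h2 where "h2 = h(c0 := h c0 + L)"
      have hr: "h c0 + L < r" using gap r1 by linarith
      have h2H: "h2 \<in> Hb r L"
        unfolding h2_def Hb_def GG_def using hH hH' hr unfolding GG_def by auto
      have edge: "{pt h, pt h2} \<in> E0 r L"
        unfolding E0_def Co_def h2_def using less.prems(1) hr by force
      have d: "dist (pt h) (pt h2 :: real ^ 'a) = real L"
        by (subst dist_pt_single[of c0]) (auto simp: h2_def)
      have W1: "wle (E0 r L) (pt h) (pt h2) (real L)" using wle_edge[OF edge] d by simp
      have nf: "(\<lambda>c. nd (h2 c) (h' c)) = (\<lambda>c. nd (h c) (h' c))(c0 := nd (h c0) (h' c0) - L)"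
        unfolding h2_def nd_def using gap by (auto simp: fun_eq_iff)
      have ndL: "nd (h c0) (h' c0) \<ge> L" unfolding nd_def using gap by simp
      have sumeq: "(\<Sum>c\<in>UNIV. nd (h2 c) (h' c)) + L = (\<Sum>c\<in>UNIV. nd (h c) (h' c))"
        using sum_upd[of "\<lambda>c. nd (h c) (h' c)" c0 "nd (h c0) (h' c0) - L"] ndL
        unfolding nf[symmetric] by simp
      have IH: "wle (E0 r L) (pt h2) (pt h') (real (\<Sum>c\<in>UNIV. nd (h2 c) (h' c)))"
        using less.hyps[of h2] h2H less.prems(2) sumeq L1 by simp
      have "real L + real (\<Sum>c\<in>UNIV. nd (h2 c) (h' c)) = real (\<Sum>c\<in>UNIV. nd (h c) (h' c))"
        using arg_cong[OF sumeq, of real] by simp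
      then show ?thesis using wle_trans[OF W1 IH] by simp
    next
      case gt
      have gap: "h' c0 + L \<le> h c0" by (rule mult_gap) (use hH(2) hH'(2) gt in auto)
      define h2 where "h2 = h(c0 := h c0 - L)"
      have hr: "h c0 - L < r" using gap r1 by linarith
      have h2H: "h2 \<in> Hb r L"
        unfolding h2_def Hb_def GG_def using hH hH' hr unfolding GG_def by (auto simp: dvd_diff_nat)
      have hback: "h2(c0 := h2 c0 + L) = h" unfolding h2_def using gap by (auto simp: fun_eq_iff)
      have "{pt h2, pt (h2(c0 := h2 c0 + L))} \<in> Co r L"
        unfolding Co_def using h2H gap r1 by (force simp: h2_def)
      then have edge: "{pt h, pt h2} \<in> E0 r L" unfolding E0_def hback by (auto simp: insert_commute)
      have d: "dist (pt h) (pt h2 :: real ^ 'a) = real L"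
        by (subst dist_pt_single[of c0]) (use gap in \<open>auto simp: h2_def\<close>)
      have W1: "wle (E0 r L) (pt h) (pt h2) (real L)" using wle_edge[OF edge] d by simp
      have nf: "(\<lambda>c. nd (h2 c) (h' c)) = (\<lambda>c. nd (h c) (h' c))(c0 := nd (h c0) (h' c0) - L)"
        unfolding h2_def nd_def using gap by (auto simp: fun_eq_iff)
      have ndL: "nd (h c0) (h' c0) \<ge> L" unfolding nd_def using gap L1 by auto
      have sumeq: "(\<Sum>c\<in>UNIV. nd (h2 c) (h' c)) + L = (\<Sum>c\<in>UNIV. nd (h c) (h' c))"
        using sum_upd[of "\<lambda>c. nd (h c) (h' c)" c0 "nd (h c0) (h' c0) - L"] ndL
        unfolding nf[symmetric] by simp
      have IH: "wle (E0 r L) (pt h2) (pt h') (real (\<Sum>c\<in>UNIV. nd (h2 c) (h' c)))"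
        using less.hyps[of h2] h2H less.prems(2) sumeq L1 by simp
      have "real L + real (\<Sum>c\<in>UNIV. nd (h2 c) (h' c)) = real (\<Sum>c\<in>UNIV. nd (h c) (h' c))"
        using arg_cong[OF sumeq, of real] by simp
      then show ?thesis using wle_trans[OF W1 IH] by simp
    qed
  qed
qed

lemma nd_real: "real (nd a b) = \<bar>real a - real b\<bar>"
  unfolding nd_def by auto

lemma hub_in: "f \<in> GG r \<Longrightarrow> hub L f \<in> Hb r L"
proof -
  assume f: "f \<in> GG r"
  have "L * (f c div L) < r" for c
  proof -
    have "L * (f c div L) \<le> f c" by simp
    moreover have "f c < r" using f unfolding GG_def by auto
    ultimately show ?thesis by linarith
  qed
  then show ?thesis unfolding Hb_def GG_def hub_def by auto
qed

lemma hub_coord: "real (nd (hub L f c) (hub L g c)) \<le> \<bar>real (f c) - real (g c)\<bar> + real L" if "L \<ge> 1"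
proof -
  have a: "real (hub L f c) = real (f c) - real (f c mod L)"
    unfolding hub_def using mult_div_mod_eq[of L "f c"] by (metis add_diff_cancel_right' of_nat_add)
  have b: "real (hub L g c) = real (g c) - real (g c mod L)"
    unfolding hub_def using mult_div_mod_eq[of L "g c"] by (metis add_diff_cancel_right' of_nat_add)
  have c: "real (f c mod L) < real L" "real (g c mod L) < real L" using that by auto
  show ?thesis unfolding nd_real a b using c by arith
qed

lemma pair_wle:
  assumes L1: "L \<ge> 1" and f: "f \<in> GG r" and g: "g \<in> GG r"
  shows "wle (E0 r L) (pt f) (pt (g :: 'n::finite \<Rightarrow> nat))
           (3 * real CARD('n) * real L + (\<Sum>c\<in>UNIV. \<bar>real (f c) - real (g c)\<bar>))"
proof -
  have modb: "real (\<Sum>c\<in>UNIV. h c mod L) \<le> real CARD('n) * real L" for h :: "'n \<Rightarrow> nat"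
  proof -
    have "(\<Sum>c\<in>UNIV. h c mod L) \<le> (\<Sum>c\<in>(UNIV::'n set). L)"
      by (rule sum_mono) (use L1 in \<open>simp add: less_imp_le\<close>)
    also have "(\<Sum>c\<in>(UNIV::'n set). L) = CARD('n) * L" by (simp add: sum_constant)
    finally have "real (\<Sum>c\<in>UNIV. h c mod L) \<le> real (CARD('n) * L)" by (simp only: of_nat_le_iff)
    then show ?thesis by simp
  qed
  have A: "wle (E0 r L) (pt f) (pt (hub L f)) (real CARD('n) * real L)"
    using wle_mono[OF tree_wle[OF L1 f] modb] .
  have C: "wle (E0 r L) (pt (hub L g)) (pt g) (real CARD('n) * real L)"
    using wle_sym[OF wle_mono[OF tree_wle[OF L1 g] modb]] .
  have sb: "real (\<Sum>c\<in>UNIV. nd (hub L f c) (hub L g c)) \<le> (\<Sum>c\<in>UNIV. \<bar>real (f c) - real (g c)\<bar>) + real CARD('n) * real L"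
  proof -
    have "real (\<Sum>c\<in>UNIV. nd (hub L f c) (hub L g c)) = (\<Sum>c\<in>UNIV. real (nd (hub L f c) (hub L g c)))" by simp
    also have "\<dots> \<le> (\<Sum>c\<in>UNIV. \<bar>real (f c) - real (g c)\<bar> + real L)"
      by (rule sum_mono) (rule hub_coord[OF L1])
    also have "\<dots> = (\<Sum>c\<in>UNIV. \<bar>real (f c) - real (g c)\<bar>) + real CARD('n) * real L"
      by (simp add: sum.distrib)
    finally show ?thesis .
  qed
  have B: "wle (E0 r L) (pt (hub L f)) (pt (hub L g)) ((\<Sum>c\<in>UNIV. \<bar>real (f c) - real (g c)\<bar>) + real CARD('n) * real L)"
    using wle_mono[OF hub_wle[OF L1 hub_in[OF f] hub_in[OF g]] sb] .
  have "wle (E0 r L) (pt f) (pt g) (real CARD('n) * real L + ((\<Sum>c\<in>UNIV. \<bar>real (f c) - real (g c)\<bar>) + real CARD('n) * real L) + real CARD('n) * real L)"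
    using wle_trans[OF wle_trans[OF A B] C] .
  then show ?thesis by (rule wle_mono) (simp add: algebra_simps)
qed

lemma ereal_div_le: "x \<le> ereal (b * d) \<Longrightarrow> d > 0 \<Longrightarrow> x / ereal d \<le> ereal b"
proof (cases x)
  case (real y)
  assume "x \<le> ereal (b * d)" "d > 0"
  then have "y / d \<le> b" using real by (simp add: divide_le_eq)
  then show ?thesis using real \<open>d > 0\<close> by simp
qed auto

lemma dil_E0:
  assumes L1: "L \<ge> 1"
  shows "dilation (grid r :: (real ^ 'n::finite) set) (E0 r L) \<le> ereal (4 * real CARD('n) * real L)"
  unfolding dilation_def
proof (rule SUP_least, clarify)
  fix u v :: "real ^ 'n" assume u: "u \<in> grid r" and v: "v \<in> grid r" and uv: "u \<noteq> v"
  obtain f g where fg: "u = pt f" "v = pt g" "f \<in> GG r" "g \<in> GG r"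
    using u v unfolding grid_eq GG_def by auto
  define d where "d = dist u v"
  have comp: "\<bar>real (f c) - real (g c)\<bar> \<le> d" for c
    using comp_le_dist[of u c v] unfolding d_def fg by simp
  have sumb: "(\<Sum>c\<in>UNIV. \<bar>real (f c) - real (g c)\<bar>) \<le> real CARD('n) * d"
    using sum_bounded_above[of UNIV "\<lambda>c. \<bar>real (f c) - real (g c)\<bar>" d] comp by simp
  have "f \<noteq> g" using uv fg by auto
  then obtain c where "f c \<noteq> g c" by auto
  then have "\<bar>real (f c) - real (g c)\<bar> \<ge> 1" by linarith
  then have d1: "d \<ge> 1" using comp[of c] by linarith
  have "wle (E0 r L) u v (3 * real CARD('n) * real L + real CARD('n) * d)"
    using wle_mono[OF pair_wle[OF L1 fg(3) fg(4)]] sumb unfolding fg by simp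
  moreover have "3 * real CARD('n) * real L + real CARD('n) * d \<le> 4 * real CARD('n) * real L * d"
  proof -
    have "real L * 1 \<le> real L * d" using d1 by (intro mult_left_mono) auto
    moreover have "1 * d \<le> real L * d" using L1 d1 by (intro mult_right_mono) auto
    ultimately have "3 * real L + d \<le> 4 * real L * d" by linarith
    then have "real CARD('n) * (3 * real L + d) \<le> real CARD('n) * (4 * real L * d)" by simp
    then show ?thesis by (simp add: algebra_simps)
  qed
  ultimately have "wle (E0 r L) u v (4 * real CARD('n) * real L * d)" by (rule wle_mono)
  then have "graph_dist (E0 r L) u v \<le> ereal (4 * real CARD('n) * real L * d)" by (rule wle_graph_dist)
  then show "graph_dist (E0 r L) u v / ereal (dist u v) \<le> ereal (4 * real CARD('n) * real L)"
    using d1 unfolding d_def by (intro ereal_div_le) auto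
qed

lemma card_GG: "card (GG r :: ('n::finite \<Rightarrow> nat) set) = r ^ CARD('n)"
  unfolding GG_def by (rule card_funs)
lemma fin_GG: "finite (GG r :: ('n::finite \<Rightarrow> nat) set)"
  unfolding GG_def by (rule finite_funs)
lemma Hb_sub: "Hb r L \<subseteq> GG r" unfolding Hb_def by auto
lemma fin_Hb: "finite (Hb r L :: ('n::finite \<Rightarrow> nat) set)" using finite_subset[OF Hb_sub fin_GG] .

lemma zero_Hb: "r \<ge> 1 \<Longrightarrow> (\<lambda>_. 0) \<in> Hb r L" unfolding Hb_def GG_def by auto

lemma card_Tr: "card (Tr r L :: (real ^ 'n::finite) set set) \<le> card (GG r :: ('n \<Rightarrow> nat) set) - card (Hb r L :: ('n \<Rightarrow> nat) set)"
proof -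
  have "card (Tr r L :: (real ^ 'n) set set) \<le> card (GG r - Hb r L :: ('n \<Rightarrow> nat) set)"
    unfolding Tr_def by (rule card_image_le) (use fin_GG in blast)
  also have "\<dots> = card (GG r :: ('n \<Rightarrow> nat) set) - card (Hb r L :: ('n \<Rightarrow> nat) set)"
    by (rule card_Diff_subset[OF fin_Hb Hb_sub])
  finally show ?thesis .
qed

lemma card_Co:
  assumes L1: "L \<ge> 1" and r1: "r \<ge> 1"
  shows "card (Co r L :: (real ^ 'n::finite) set set) \<le> (card (Hb r L :: ('n \<Rightarrow> nat) set) - 1) * CARD('n)"
proof -
  define Dm where "Dm = {(h', c). h' \<in> (Hb r L :: ('n \<Rightarrow> nat) set) \<and> h' c \<ge> L}"
  define \<psi> where "\<psi> = (\<lambda>(h' :: 'n \<Rightarrow> nat, c). {pt (h'(c := h' c - L)), pt h'} :: (real ^ 'n) set)"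
  have sub: "Co r L \<subseteq> \<psi> ` Dm"
  proof
    fix e assume "e \<in> (Co r L :: (real ^ 'n) set set)"
    then obtain h c where hc: "h \<in> Hb r L" "h c + L < r" "e = {pt h, pt (h(c := h c + L))}"
      unfolding Co_def by auto
    define h' where "h' = h(c := h c + L)"
    have h'H: "h' \<in> Hb r L" using hc unfolding h'_def Hb_def GG_def by auto
    have "h'(c := h' c - L) = h" unfolding h'_def by (auto simp: fun_eq_iff)
    then have "\<psi> (h', c) = e" unfolding \<psi>_def hc(3) h'_def by auto
    moreover have "(h', c) \<in> Dm" unfolding Dm_def using h'H by (simp add: h'_def)
    ultimately show "e \<in> \<psi> ` Dm" by force
  qed
  have sub2: "Dm \<subseteq> ((Hb r L :: ('n \<Rightarrow> nat) set) - {\<lambda>_. 0}) \<times> UNIV"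
    unfolding Dm_def using L1 by (auto simp: fun_eq_iff)
  have fin2: "finite (((Hb r L :: ('n \<Rightarrow> nat) set) - {\<lambda>_. 0}) \<times> (UNIV :: 'n set))"
  proof -
    have "finite (Hb r L :: ('n \<Rightarrow> nat) set)" by (rule fin_Hb)
    then show ?thesis by simp
  qed
  have "card (Co r L :: (real ^ 'n) set set) \<le> card (\<psi> ` Dm)"
    by (rule card_mono) (use sub fin2 finite_subset[OF sub2 fin2] in auto)
  also have "\<dots> \<le> card Dm" by (rule card_image_le) (use finite_subset[OF sub2 fin2] in auto)
  also have "\<dots> \<le> card (((Hb r L :: ('n \<Rightarrow> nat) set) - {\<lambda>_. 0}) \<times> (UNIV :: 'n set))" by (rule card_mono[OF fin2 sub2])
  also have "\<dots> = (card (Hb r L :: ('n \<Rightarrow> nat) set) - 1) * CARD('n)"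
  proof -
    have "finite (Hb r L :: ('n \<Rightarrow> nat) set)" by (rule fin_Hb)
    moreover have "(\<lambda>_. 0) \<in> (Hb r L :: ('n \<Rightarrow> nat) set)" by (rule zero_Hb[OF r1])
    ultimately show ?thesis by (simp add: card_cartesian_product)
  qed
  finally show ?thesis .
qed

lemma card_Hb_le:
  assumes L1: "L \<ge> 1" and rQ: "r \<le> L * Q"
  shows "card (Hb r L :: ('n::finite \<Rightarrow> nat) set) \<le> Q ^ CARD('n)"
proof -
  define \<phi> where "\<phi> = (\<lambda>(h :: 'n \<Rightarrow> nat) c. h c div L)"
  have inj: "inj_on \<phi> (Hb r L)"
  proof (rule inj_onI)
    fix h h' assume h: "h \<in> Hb r L" and h': "h' \<in> Hb r L" and eq: "\<phi> h = \<phi> h'"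
    show "h = h'"
    proof
      fix c
      have "h c div L = h' c div L" using eq unfolding \<phi>_def by (metis)
      moreover have "L dvd h c" "L dvd h' c" using h h' unfolding Hb_def by auto
      ultimately show "h c = h' c" by (metis dvd_div_mult_self)
    qed
  qed
  have img: "\<phi> ` Hb r L \<subseteq> GG Q"
  proof
    fix x assume "x \<in> \<phi> ` Hb r L"
    then obtain h where h: "h \<in> Hb r L" "x = \<phi> h" by auto
    have "h c div L < Q" for c
    proof -
      have "h c < L * Q" using h(1) rQ unfolding Hb_def GG_def by (auto intro: less_le_trans)
      then show ?thesis using L1 by (simp add: div_less_iff_less_mult mult.commute)
    qed
    then show "x \<in> GG Q" unfolding GG_def h(2) \<phi>_def by auto
  qed
  have "card (Hb r L :: ('n \<Rightarrow> nat) set) \<le> card (GG Q :: ('n \<Rightarrow> nat) set)"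
    by (rule card_inj_on_le[OF inj img fin_GG])
  then show ?thesis by (simp add: card_GG)
qed

lemma par_props:
  assumes f: "f \<in> GG r - Hb r L"
  shows "par L f \<in> GG r" "par L f \<noteq> f"
proof -
  have ex: "\<exists>c. \<not> L dvd f c" using f unfolding Hb_def by auto
  have c0: "\<not> L dvd f (pc L f)" unfolding pc_def using someI_ex[OF ex] .
  then have "f (pc L f) \<noteq> 0" by (metis dvd_0_right)
  then show "par L f \<in> GG r" "par L f \<noteq> f" using f unfolding par_def GG_def
    by (auto simp: fun_eq_iff less_imp_diff_less)
qed

lemma E0_sub:
  assumes L1: "L \<ge> 1"
  shows "E0 r L \<subseteq> graph_edges_on (grid r :: (real ^ 'n::finite) set)"
proof
  fix e :: "(real ^ 'n) set" assume "e \<in> E0 r L"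
  then consider (t) f where "f \<in> GG r - Hb r L" "e = {pt f, pt (par L f)}"
    | (c) h c where "h \<in> Hb r L" "h c + L < r" "e = {pt h, pt (h(c := h c + L))}"
    unfolding E0_def Tr_def Co_def by auto
  then show "e \<in> graph_edges_on (grid r)"
  proof cases
    case t
    have "pt f \<noteq> pt (par L f)" using par_props(2)[OF t(1)] pt_inj by (metis injD)
    moreover have "pt f \<in> grid r" "pt (par L f) \<in> grid r"
      using t(1) par_props(1)[OF t(1)] unfolding grid_eq GG_def by auto
    ultimately show ?thesis unfolding graph_edges_on_def t(2) by blast
  next
    case c
    have "h \<noteq> h(c := h c + L)" using L1 by (auto simp: fun_eq_iff)
    then have "pt h \<noteq> pt (h(c := h c + L))" using pt_inj by (metis injD)
    moreover have "pt h \<in> grid r" "pt (h(c := h c + L)) \<in> grid r"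
      using c(1,2) unfolding grid_eq Hb_def GG_def by (auto intro!: imageI)
    ultimately show ?thesis unfolding graph_edges_on_def c(3) by blast
  qed
qed

lemma card_E0:
  assumes L1: "L \<ge> 1" and r1: "r \<ge> 1" and rQ: "r \<le> L * Q"
  shows "card (E0 r L :: (real ^ 'n::finite) set set) \<le> r ^ CARD('n) - 1 + (CARD('n) - 1) * (Q ^ CARD('n) - 1)"
proof -
  define H where "H = card (Hb r L :: ('n \<Rightarrow> nat) set)"
  define D where "D = CARD('n)"
  have H1: "H \<ge> 1" unfolding H_def using zero_Hb[OF r1, of L] fin_Hb
    by (metis One_nat_def Suc_leI card_gt_0_iff empty_iff)
  have HQ: "H \<le> Q ^ D" unfolding H_def D_def by (rule card_Hb_le[OF L1 rQ])
  have Hr: "H \<le> r ^ D" unfolding H_def D_def using card_mono[OF fin_GG Hb_sub] card_GG by metis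
  have D1: "D \<ge> 1" unfolding D_def by simp
  have "card (E0 r L :: (real ^ 'n) set set) \<le> card (Tr r L :: (real ^ 'n) set set) + card (Co r L :: (real ^ 'n) set set)"
    unfolding E0_def by (rule card_Un_le)
  also have "\<dots> \<le> (r ^ D - H) + (H - 1) * D"
  proof -
    have cG: "card (GG r :: ('n \<Rightarrow> nat) set) = r ^ D" unfolding D_def by (rule card_GG)
    have t: "card (Tr r L :: (real ^ 'n) set set) \<le> card (GG r :: ('n \<Rightarrow> nat) set) - card (Hb r L :: ('n \<Rightarrow> nat) set)"
      by (rule card_Tr)
    have c: "card (Co r L :: (real ^ 'n) set set) \<le> (card (Hb r L :: ('n \<Rightarrow> nat) set) - 1) * CARD('n)"
      by (rule card_Co[OF L1 r1])
    show ?thesis using t c cG unfolding H_def D_def by (intro add_mono) auto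
  qed
  also have "\<dots> = r ^ D - 1 + (D - 1) * (H - 1)"
  proof -
    obtain x where x: "H = x + 1" using H1 by (metis add.commute le_Suc_ex)
    obtain y where y: "D = y + 1" using D1 by (metis add.commute le_Suc_ex)
    show ?thesis using Hr unfolding x y by (simp add: algebra_simps)
  qed
  also have "\<dots> \<le> r ^ D - 1 + (D - 1) * (Q ^ D - 1)"
    using HQ by (intro add_left_mono mult_le_mono2) simp
  finally show ?thesis unfolding D_def .
qed

lemma graph_edges_card:
  assumes "finite S"
  shows "card (graph_edges_on S) = card S choose 2"
proof -
  have "graph_edges_on S = {B. B \<subseteq> S \<and> card B = 2}"
    unfolding graph_edges_on_def by (auto simp: card_2_iff)
  then show ?thesis using n_subsets[OF assms, of 2] by simp
qed

lemma choose2_ge: "n \<ge> 4 \<Longrightarrow> n choose 2 \<ge> 2 * n - 2"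
proof -
  assume n: "n \<ge> 4"
  have "4 * (n - 1) \<le> n * (n - 1)" using n by (intro mult_le_mono1) simp
  then have "(4 * (n - 1)) div 2 \<le> n * (n - 1) div 2" by (rule div_le_mono)
  then show ?thesis unfolding choose_two by simp
qed

lemma extend_card:
  assumes "finite A" "F0 \<subseteq> A" "card F0 \<le> N" "N \<le> card A"
  obtains E where "F0 \<subseteq> E" "E \<subseteq> A" "card E = N"
proof -
  have fF0: "finite F0" using assms(1,2) finite_subset by blast
  have "N - card F0 \<le> card (A - F0)" using assms fF0 by (simp add: card_Diff_subset)
  then obtain B where B: "B \<subseteq> A - F0" "card B = N - card F0" "finite B"
    by (rule obtain_subset_with_card_n)
  have "card (F0 \<union> B) = card F0 + card B" using B fF0 by (intro card_Un_disjoint) auto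
  then have "card (F0 \<union> B) = N" using B assms(3) by simp
  moreover have "F0 \<subseteq> F0 \<union> B" "F0 \<union> B \<subseteq> A" using B assms(2) by auto
  ultimately show ?thesis using that by blast
qed

lemma graph_dist_mono: "F0 \<subseteq> E \<Longrightarrow> graph_dist E u v \<le> graph_dist F0 u v"
  unfolding graph_dist_def by (rule INF_superset_mono) (auto intro: walk_mono)

lemma dilation_mono: "F0 \<subseteq> E \<Longrightarrow> dilation S E \<le> dilation S F0"
  unfolding dilation_def
proof (rule SUP_mono, clarify)
  fix a b assume F: "F0 \<subseteq> E" and ab: "a \<in> S" "b \<in> S" "a \<noteq> b"
  have "graph_dist E a b / ereal (dist a b) \<le> graph_dist F0 a b / ereal (dist a b)"
    using ab by (intro ereal_divide_right_mono graph_dist_mono[OF F]) auto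
  then show "\<exists>m\<in>{(u, v). u \<in> S \<and> v \<in> S \<and> u \<noteq> v}.
       graph_dist E a b / ereal (dist a b) \<le> (case m of (u, v) \<Rightarrow> graph_dist F0 u v / ereal (dist u v))"
    using ab by (intro bexI[of _ "(a, b)"]) auto
qed

lemma upper_main:
  assumes D2: "CARD('n::finite) \<ge> 2" and r2: "r \<ge> 2" and kn: "k < r ^ CARD('n)"
  shows "min_dilation (grid r :: (real ^ 'n) set) k
           \<le> ereal (16 * real CARD('n) ^ 2 * real r / real (k + 1) powr (1 / real CARD('n)))"
proof -
  define D where "D = CARD('n)"
  define m where "m = k + 1"
  define S where "S = (grid r :: (real ^ 'n) set)"
  define \<mu> where "\<mu> = real m powr (1 / real D)"
  have D1: "D \<ge> 1" "D \<ge> 2" using D2 unfolding D_def by auto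
  have m1: "m \<ge> 1" unfolding m_def by simp
  have mu1: "\<mu> \<ge> 1" unfolding \<mu>_def by (rule ge_one_powr_ge_zero) (use m1 in auto)
  have mupow: "\<mu> ^ D = real m" unfolding \<mu>_def by (rule powr_root_pow) (use m1 D1 in auto)
  define Qs where "Qs = {q. 1 \<le> q \<and> q \<le> m \<and> (q = 1 \<or> D * q ^ D \<le> m)}"
  define Q where "Q = Max Qs"
  have finQs: "finite Qs" unfolding Qs_def by (rule finite_subset[of _ "{..m}"]) auto
  have oneQs: "1 \<in> Qs" unfolding Qs_def using m1 by simp
  have QQs: "Q \<in> Qs" unfolding Q_def using finQs oneQs by (intro Max_in) auto
  then have Q1: "Q \<ge> 1" and Qm: "Q \<le> m" and Qc: "Q = 1 \<or> D * Q ^ D \<le> m" unfolding Qs_def by auto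
  have rD: "r ^ D \<ge> 4"
  proof -
    have "r ^ D \<ge> 2 ^ D" using r2 by (simp add: power_mono)
    moreover have "(2::nat) ^ D \<ge> 2 ^ 2" using D1 by (intro power_increasing) auto
    ultimately show ?thesis by simp
  qed
  have mr: "m \<le> r ^ D" using kn unfolding m_def D_def by simp
  have Qr: "Q \<le> r"
  proof (rule ccontr)
    assume "\<not> Q \<le> r"
    then have "r ^ D < Q ^ D" using D1 by (intro power_strict_mono) auto
    moreover have "Q ^ D \<le> m"
    proof (cases "Q = 1")
      case True then show ?thesis using m1 by simp
    next
      case False
      then have "D * Q ^ D \<le> m" using Qc by simp
      moreover have "Q ^ D \<le> D * Q ^ D" using D1 by simp
      ultimately show ?thesis by linarith
    qed
    ultimately show False using mr by linarith
  qed
  have kb: "(D - 1) * (Q ^ D - 1) \<le> k"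
  proof (cases "Q = 1")
    case True then show ?thesis by simp
  next
    case False
    then have c: "D * Q ^ D \<le> m" using Qc by simp
    have P1: "Q ^ D \<ge> 1" using Q1 by simp
    have e: "(D - 1) * Q ^ D + Q ^ D = D * Q ^ D" using D1 by (cases D) auto
    have "(D - 1) * (Q ^ D - 1) \<le> (D - 1) * Q ^ D" by (intro mult_le_mono2) simp
    then show ?thesis using c e P1 unfolding m_def by linarith
  qed
  have notQ1: "Q + 1 \<notin> Qs"
  proof
    assume "Q + 1 \<in> Qs"
    then have "Q + 1 \<le> Q" unfolding Q_def using finQs by (rule Max_ge[rotated])
    then show False by simp
  qed
  have maxQ: "real m < real D * real (Q + 1) ^ D"
  proof (cases "Q + 1 \<le> m")
    case True
    then have "\<not> D * (Q + 1) ^ D \<le> m" using notQ1 Q1 unfolding Qs_def by auto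
    then have "m < D * (Q + 1) ^ D" by simp
    then have "real m < real (D * (Q + 1) ^ D)" by (simp only: of_nat_less_iff)
    then show ?thesis by simp
  next
    case False
    have "Q + 1 \<le> (Q + 1) ^ D" using power_increasing[of 1 D "Q + 1"] D1 by simp
    moreover have "(Q + 1) ^ D \<le> D * (Q + 1) ^ D" using D1 by simp
    ultimately have "m < D * (Q + 1) ^ D" using False by linarith
    then have "real m < real (D * (Q + 1) ^ D)" by (simp only: of_nat_less_iff)
    then show ?thesis by simp
  qed
  have muQ: "\<mu> < 2 * real D * real Q"
  proof -
    have "real D ^ 1 \<le> real D ^ D" using D1 by (intro power_increasing) auto
    then have dd: "real D * real (Q + 1) ^ D \<le> real D ^ D * real (Q + 1) ^ D" by (intro mult_right_mono) auto
    have pe: "(real D * real (Q + 1)) ^ D = real D ^ D * real (Q + 1) ^ D" by (rule power_mult_distrib)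
    have mlt: "real m < (real D * real (Q + 1)) ^ D" unfolding pe using maxQ dd by linarith
    have "\<mu> < real D * real (Q + 1)"
    proof (rule ccontr)
      assume "\<not> \<mu> < real D * real (Q + 1)"
      then have "(real D * real (Q + 1)) ^ D \<le> \<mu> ^ D" by (intro power_mono) auto
      then show False using mlt mupow by simp
    qed
    moreover have "real D * real (Q + 1) \<le> real D * (2 * real Q)" using Q1 by (intro mult_left_mono) auto
    then have "real D * real (Q + 1) \<le> 2 * real D * real Q" by simp
    ultimately show ?thesis by linarith
  qed
  define L where "L = (r + Q - 1) div Q"
  have QL: "Q * L + (r + Q - 1) mod Q = r + Q - 1" unfolding L_def by (rule mult_div_mod_eq)
  have modQ: "(r + Q - 1) mod Q \<le> Q - 1" using mod_less_divisor[of Q "r + Q - 1"] Q1 by linarith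
  have rQ: "r \<le> L * Q" using QL modQ Q1 by (simp add: mult.commute)
  have L1: "L \<ge> 1"
  proof (rule ccontr)
    assume "\<not> L \<ge> 1" then have "L = 0" by simp
    then show False using rQ r2 by simp
  qed
  have LQ2: "real L * real Q \<le> 2 * real r"
  proof -
    have "Q * L \<le> r + Q - 1" using QL by linarith
    then have "L * Q \<le> 2 * r" using Qr by (simp add: mult.commute)
    then have "real (L * Q) \<le> real (2 * r)" by (simp only: of_nat_le_iff)
    then show ?thesis by simp
  qed
  have r1: "r \<ge> 1" using r2 by simp
  define E0' where "E0' = (E0 r L :: (real ^ 'n) set set)"
  have cE0: "card E0' \<le> r ^ D - 1 + k"
  proof -
    have "card E0' \<le> r ^ D - 1 + (D - 1) * (Q ^ D - 1)" unfolding E0'_def D_def by (rule card_E0[OF L1 r1 rQ])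
    then show ?thesis using kb by linarith
  qed
  have E0sub: "E0' \<subseteq> graph_edges_on S" unfolding E0'_def S_def by (rule E0_sub[OF L1])
  have cS: "card S = r ^ D" unfolding S_def D_def by (rule card_grid)
  have finS: "finite S" unfolding S_def by (rule finite_grid)
  have finA: "finite (graph_edges_on S)"
    by (rule finite_subset[of _ "Pow S"]) (use finS in \<open>auto simp: graph_edges_on_def\<close>)
  have cA: "r ^ D - 1 + k \<le> card (graph_edges_on S)"
  proof -
    have "card (graph_edges_on S) = r ^ D choose 2" using graph_edges_card[OF finS] cS by simp
    moreover have "r ^ D choose 2 \<ge> 2 * r ^ D - 2" using choose2_ge rD by simp
    ultimately show ?thesis using kn unfolding D_def by linarith
  qed
  obtain E where E: "E0' \<subseteq> E" "E \<subseteq> graph_edges_on S" "card E = r ^ D - 1 + k"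
    using extend_card[OF finA E0sub cE0 cA] by blast
  have "min_dilation S k \<le> dilation S E"
    unfolding min_dilation_def using E cS by (intro INF_lower) auto
  also have "\<dots> \<le> dilation S E0'" by (rule dilation_mono[OF E(1)])
  also have "\<dots> \<le> ereal (4 * real D * real L)" unfolding E0'_def S_def D_def by (rule dil_E0[OF L1])
  also have "\<dots> \<le> ereal (16 * real D ^ 2 * real r / \<mu>)"
  proof -
    have mu0: "\<mu> > 0" using mu1 by simp
    have "real L * \<mu> \<le> real L * (2 * real D * real Q)" using muQ by (intro mult_left_mono) auto
    also have "\<dots> = 2 * real D * (real L * real Q)" by simp
    also have "\<dots> \<le> 2 * real D * (2 * real r)" using LQ2 by (intro mult_left_mono) auto
    finally have "real L * \<mu> \<le> 4 * real D * real r" by simp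
    then have "(4 * real D) * (real L * \<mu>) \<le> (4 * real D) * (4 * real D * real r)"
      by (intro mult_left_mono) auto
    then have "4 * real D * real L * \<mu> \<le> 16 * real D ^ 2 * real r"
      by (simp add: power2_eq_square algebra_simps)
    then show ?thesis using mu0 by (simp add: pos_le_divide_eq)
  qed
  finally show ?thesis unfolding S_def D_def \<mu>_def m_def by simp
qed

lemma lower_final:
  assumes D2: "CARD('n::finite) \<ge> 2" and r2: "r \<ge> 2"
  shows "ereal (1 / 20 * real r / real (k + 1) powr (1 / real CARD('n))) \<le> min_dilation (grid r :: (real ^ 'n) set) k"
  unfolding min_dilation_def
proof (rule INF_greatest, clarify)
  fix E :: "(real ^ 'n) set set"
  assume Es: "E \<subseteq> graph_edges_on (grid r)" and cE: "card E = card (grid r :: (real ^ 'n) set) - 1 + k"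
  define T0 where "T0 = 1 / 20 * real r / real (k + 1) powr (1 / real CARD('n))"
  show "ereal T0 \<le> dilation (grid r) E"
  proof (rule ccontr)
    assume "\<not> ereal T0 \<le> dilation (grid r) E"
    then have lt: "dilation (grid r) E < ereal T0" by simp
    then obtain z where z: "dilation (grid r) E < z" "z < ereal T0" using dense by blast
    then obtain T' where T': "z = ereal T'" by (cases z) auto
    have cE': "card E = r ^ CARD('n) - 1 + k" using cE card_grid by metis
    have "T' \<ge> real r / (20 * real (k + 1) powr (1 / real CARD('n)))"
      by (rule lower_main[OF D2 r2 Es cE']) (use z T' in simp)
    moreover have "T' < T0" using z T' by simp
    moreover have "T0 = real r / (20 * real (k + 1) powr (1 / real CARD('n)))" unfolding T0_def by simp
    ultimately show False by simp
  qed
qed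

theorem corollary3:
  assumes "CARD('n::finite) \<ge> 2"
  shows "\<exists>c1 c2 :: real. c1 > 0 \<and> c2 > 0 \<and>
    (\<forall>r::nat. r \<ge> 2 \<longrightarrow> (\<forall>k::nat. k < r ^ CARD('n) \<longrightarrow>
       ereal (c1 * real r / real (k + 1) powr (1 / real CARD('n)))
         \<le> min_dilation (grid r :: (real ^ 'n) set) k \<and>
       min_dilation (grid r :: (real ^ 'n) set) k
         \<le> ereal (c2 * real r / real (k + 1) powr (1 / real CARD('n)))))"
proof (rule exI[of _ "1 / 20"], rule exI[of _ "16 * real CARD('n) ^ 2"], intro conjI allI impI)
  show "(0::real) < 1 / 20" by simp
  show "0 < 16 * real CARD('n) ^ 2" by simp
  fix r k :: nat assume r2: "r \<ge> 2" and kn: "k < r ^ CARD('n)"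
  show "ereal (1 / 20 * real r / real (k + 1) powr (1 / real CARD('n))) \<le> min_dilation (grid r :: (real ^ 'n) set) k"
    by (rule lower_final[OF assms r2])
  show "min_dilation (grid r :: (real ^ 'n) set) k \<le> ereal (16 * real CARD('n) ^ 2 * real r / real (k + 1) powr (1 / real CARD('n)))"
    by (rule upper_main[OF assms r2 kn])
qed

end
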